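(* Let $f\in\mathbf{R}_\ell$, written as $f(z)=\ell z+R(e^{2\pi iz})$ with $\ell\in\mathbb{Z}$ and $R$ a non-constant rational map with $R(0)\neq\infty$, $R(\infty)\neq\infty$, and let $g(w)=w^\ell e^{2\pi iR(w)}$ be its exponential projection. Then $g$ is of finite type with $\mathcal{AV}(g)=\{0,\infty\}$ and $\mathcal{E}(g)=\exp_1(f^{-1}(\infty))$. Moreover: (i) if $\ell=1$, then $0$ and $\infty$ are fixed points of $g$ with multipliers $g'(0)=e^{2\pi iR(0)}$ and $g'(\infty)=e^{-2\pi iR(\infty)}$, while if $\ell\ge2$ both are fixed critical points; (ii) if $\ell=-1$, then $\{0,\infty\}$ is a $2$-cycle with multiplier $e^{2\pi i(R(\infty)-R(0))}$, while if $\ell\le-2$ it is a critical $2$-cycle; (iii) if $\ell=0$, then $0$ (resp. $\infty$) is a critical point of $g$ if and only if $R'(0)=0$ (resp. $R'(\infty)=0$).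
   Context: $\exp_1(z)=e^{2\pi iz}$. $\mathbf{R}_\ell$ is the class of functions $\ell z+R(e^{2\pi iz})$ with $R$ a non-constant rational map, $R(0)\neq\infty$, $R(\infty)\neq\infty$, $R^{-1}(\infty)\neq\emptyset$. $\mathcal{E}(g)$ is the set of essential singularities of $g$; $\mathcal{AV}(g)$ its asymptotic values (limits of $g$ along paths tending to points of $\mathcal{E}(g)$); $g$ is of finite type if its set of singular values (closure of critical and asymptotic values) is finite. Derivatives and multipliers at $\infty$ are taken in the local coordinate $1/w$. *)

theory Defs
  imports "HOL-Complex_Analysis.Complex_Analysis" "HOL-Computational_Algebra.Polynomial"
begin

text \<open>The Riemann sphere is modelled as complex option: Some z is the point z, None is infinity.\<close>

definition exp1 :: "complex \<Rightarrow> complex" where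
  "exp1 z = exp (2 * of_real pi * \<i> * z)"

text \<open>Rational function P/Q (junk value 0 at zeros of Q; only limits are ever used there).\<close>
definition ratf :: "complex poly \<Rightarrow> complex poly \<Rightarrow> complex \<Rightarrow> complex" where
  "ratf P Q w = poly P w / poly Q w"

definition fR :: "int \<Rightarrow> complex poly \<Rightarrow> complex poly \<Rightarrow> complex \<Rightarrow> complex" where
  "fR l P Q z = of_int l * z + ratf P Q (exp1 z)"

definition gproj :: "int \<Rightarrow> complex poly \<Rightarrow> complex poly \<Rightarrow> complex \<Rightarrow> complex" where
  "gproj l P Q w = w powi l * exp (2 * of_real pi * \<i> * ratf P Q w)"

definition sph_conv :: "('a \<Rightarrow> complex option) \<Rightarrow> complex option \<Rightarrow> 'a filter \<Rightarrow> bool" where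
  "sph_conv s q F = (case q of
      Some d \<Rightarrow> (\<forall>e>0. eventually (\<lambda>x. \<exists>z. s x = Some z \<and> dist z d < e) F)
    | None \<Rightarrow> (\<forall>M. eventually (\<lambda>x. case s x of None \<Rightarrow> True | Some z \<Rightarrow> M < norm z) F))"

definition pfilter :: "complex option \<Rightarrow> complex filter" where
  "pfilter p = (case p of Some c \<Rightarrow> at c | None \<Rightarrow> at_infinity)"

definition sph_ext :: "(complex \<Rightarrow> complex) \<Rightarrow> complex option \<Rightarrow> complex option" where
  "sph_ext g p = (THE q. sph_conv (\<lambda>w. Some (g w)) q (pfilter p))"

text \<open>Local coordinates: w near a finite point, 1/w near infinity.\<close>
definition chart_inv :: "complex option \<Rightarrow> complex \<Rightarrow> complex option" where
  "chart_inv p u = (case p of Some _ \<Rightarrow> Some u | None \<Rightarrow> (if u = 0 then None else Some (inverse u)))"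

definition chart :: "complex option \<Rightarrow> complex option \<Rightarrow> complex" where
  "chart q x = (case q of
      Some _ \<Rightarrow> (case x of Some y \<Rightarrow> y | None \<Rightarrow> 0)
    | None \<Rightarrow> (case x of None \<Rightarrow> 0 | Some y \<Rightarrow> inverse y))"

definition coord :: "complex option \<Rightarrow> complex" where
  "coord p = (case p of Some c \<Rightarrow> c | None \<Rightarrow> 0)"

definition sph_deriv :: "(complex option \<Rightarrow> complex option) \<Rightarrow> complex option \<Rightarrow> complex \<Rightarrow> bool" where
  "sph_deriv H p D = ((\<lambda>u. chart (H p) (H (chart_inv p u))) has_field_derivative D) (at (coord p))"

definition crit_pt :: "(complex option \<Rightarrow> complex option) \<Rightarrow> complex option \<Rightarrow> bool" where
  "crit_pt H p = sph_deriv H p 0"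

definition ess_sing_at :: "(complex \<Rightarrow> complex) \<Rightarrow> complex option \<Rightarrow> bool" where
  "ess_sing_at g p = (case p of
      Some z \<Rightarrow> isolated_singularity_at g z \<and> \<not> not_essential g z
    | None \<Rightarrow> isolated_singularity_at (\<lambda>u. g (inverse u)) 0 \<and> \<not> not_essential (\<lambda>u. g (inverse u)) 0)"

definition ess_sings :: "(complex \<Rightarrow> complex) \<Rightarrow> complex option set" where
  "ess_sings g = {p. ess_sing_at g p}"

definition asym_vals :: "(complex \<Rightarrow> complex) \<Rightarrow> complex option set" where
  "asym_vals g = {a. \<exists>(\<gamma>::real \<Rightarrow> complex) e. e \<in> ess_sings g \<and> continuous_on {0..<1} \<gamma> \<and>
      (\<forall>t\<in>{0..<1}. Some (\<gamma> t) \<notin> ess_sings g) \<and>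
      sph_conv (\<lambda>t. Some (\<gamma> t)) e (at_left 1) \<and>
      sph_conv (\<lambda>t. sph_ext g (Some (\<gamma> t))) a (at_left 1)}"

definition crit_vals :: "(complex \<Rightarrow> complex) \<Rightarrow> complex option set" where
  "crit_vals g = {sph_ext g p | p. p \<notin> ess_sings g \<and> crit_pt (sph_ext g) p}"

definition sph_closure :: "complex option set \<Rightarrow> complex option set" where
  "sph_closure S = {q. \<exists>s. (\<forall>n. s n \<in> S) \<and> sph_conv s q sequentially}"

definition finite_type :: "(complex \<Rightarrow> complex) \<Rightarrow> bool" where
  "finite_type g = finite (sph_closure (crit_vals g \<union> asym_vals g))"

end

theory Submission
  imports Defs
begin

section \<open>Generic facts about sphere convergence\<close>

lemma sph_conv_Some_iff:
  "sph_conv (\<lambda>x. Some (f x)) (Some d) F \<longleftrightarrow> (f \<longlongrightarrow> d) F"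
  unfolding sph_conv_def tendsto_iff by simp

lemma sph_conv_None_iff:
  "sph_conv (\<lambda>x. Some (f x)) None F \<longleftrightarrow> filterlim f at_infinity F"
proof -
  have "filterlim f at_infinity F \<longleftrightarrow> (\<forall>r>0. eventually (\<lambda>x. r \<le> norm (f x)) F)"
    using filterlim_at_infinity[of 0 f F] by simp
  also have "\<dots> \<longleftrightarrow> (\<forall>M. eventually (\<lambda>x. M < norm (f x)) F)"
  proof safe
    fix M assume H: "\<forall>r>0. eventually (\<lambda>x. r \<le> norm (f x)) F"
    have "eventually (\<lambda>x. max M 0 + 1 \<le> norm (f x)) F" using H by simp
    then show "eventually (\<lambda>x. M < norm (f x)) F" by eventually_elim auto
  next
    fix r :: real assume H: "\<forall>M. eventually (\<lambda>x. M < norm (f x)) F" and "r > 0"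
    from H[rule_format, of r] show "eventually (\<lambda>x. r \<le> norm (f x)) F"
      by eventually_elim auto
  qed
  finally show ?thesis unfolding sph_conv_def by simp
qed

lemma sph_conv_unique:
  assumes "F \<noteq> bot" "sph_conv s q F" "sph_conv s q' F"
  shows "q = q'"
proof (cases q)
  case None
  show ?thesis
  proof (cases q')
    case (Some d')
    have "eventually (\<lambda>x. \<exists>z. s x = Some z \<and> dist z d' < 1) F"
      using assms(3) Some unfolding sph_conv_def by simp
    moreover have "eventually (\<lambda>x. case s x of None \<Rightarrow> True | Some z \<Rightarrow> norm d' + 1 < norm z) F"
      using assms(2) None unfolding sph_conv_def by simp
    ultimately have "eventually (\<lambda>x. False) F"
    proof eventually_elim
      case (elim x)
      then obtain z where z: "s x = Some z" "dist z d' < 1" by auto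
      with elim(2) have "norm d' + 1 < norm z" by simp
      moreover have "norm z \<le> norm d' + dist z d'"
        by (metis dist_norm norm_triangle_sub add.commute)
      ultimately show False using z by simp
    qed
    with assms(1) show ?thesis by (simp add: eventually_False)
  qed (simp add: None)
next
  case (Some d)
  show ?thesis
  proof (cases q')
    case None
    have "eventually (\<lambda>x. \<exists>z. s x = Some z \<and> dist z d < 1) F"
      using assms(2) Some unfolding sph_conv_def by simp
    moreover have "eventually (\<lambda>x. case s x of None \<Rightarrow> True | Some z \<Rightarrow> norm d + 1 < norm z) F"
      using assms(3) None unfolding sph_conv_def by simp
    ultimately have "eventually (\<lambda>x. False) F"
    proof eventually_elim
      case (elim x)
      then obtain z where z: "s x = Some z" "dist z d < 1" by auto
      with elim(2) have "norm d + 1 < norm z" by simp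
      moreover have "norm z \<le> norm d + dist z d"
        by (metis dist_norm norm_triangle_sub add.commute)
      ultimately show False using z by simp
    qed
    with assms(1) show ?thesis by (simp add: eventually_False)
  next
    case (Some d')
    show ?thesis
    proof (rule ccontr)
      assume "q \<noteq> q'"
      then have ne: "d \<noteq> d'" using Some \<open>q = Some d\<close> by simp
      define e where "e = dist d d' / 2"
      have e: "e > 0" using ne by (simp add: e_def)
      have "eventually (\<lambda>x. \<exists>z. s x = Some z \<and> dist z d < e) F"
        using assms(2) \<open>q = Some d\<close> e unfolding sph_conv_def by simp
      moreover have "eventually (\<lambda>x. \<exists>z. s x = Some z \<and> dist z d' < e) F"
        using assms(3) Some e unfolding sph_conv_def by simp
      ultimately have "eventually (\<lambda>x. False) F"
      proof eventually_elim
        case (elim x)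
        then obtain z where "dist z d < e" "dist z d' < e" by auto
        then have "dist d d' < 2 * e" by (metis dist_commute dist_triangle_lt add_strict_mono mult_2)
        then show False by (simp add: e_def)
      qed
      with assms(1) show False by (simp add: eventually_False)
    qed
  qed
qed

lemma pfilter_nontriv: "pfilter p \<noteq> bot"
  by (cases p) (auto simp: pfilter_def trivial_limit_at_infinity)

lemma sph_ext_eqI:
  assumes "sph_conv (\<lambda>w. Some (g w)) q (pfilter p)"
  shows "sph_ext g p = q"
  unfolding sph_ext_def
  using assms sph_conv_unique[OF pfilter_nontriv] by blast

lemma sph_ext_Some_lim: "(g \<longlongrightarrow> d) (at c) \<Longrightarrow> sph_ext g (Some c) = Some d"
  by (rule sph_ext_eqI) (simp add: pfilter_def sph_conv_Some_iff)

lemma sph_ext_Some_cont: "isCont g c \<Longrightarrow> sph_ext g (Some c) = Some (g c)"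
  by (rule sph_ext_Some_lim) (simp add: isCont_def)

lemma sph_ext_Some_pole: "filterlim g at_infinity (at c) \<Longrightarrow> sph_ext g (Some c) = None"
  by (rule sph_ext_eqI) (simp add: pfilter_def sph_conv_None_iff)

lemma at_infinity_inv: "at_infinity = filtermap inverse (at (0::complex))"
  by (simp add: at_to_infinity filtermap_filtermap)

lemma sph_ext_None_lim: "((\<lambda>u. g (inverse u)) \<longlongrightarrow> d) (at 0) \<Longrightarrow> sph_ext g None = Some d"
  by (rule sph_ext_eqI) (simp add: pfilter_def sph_conv_Some_iff at_infinity_inv filterlim_filtermap o_def)

lemma sph_ext_None_pole: "filterlim (\<lambda>u. g (inverse u)) at_infinity (at 0) \<Longrightarrow> sph_ext g None = None"
  by (rule sph_ext_eqI) (simp add: pfilter_def sph_conv_None_iff at_infinity_inv filterlim_filtermap o_def)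

lemma sph_deriv_cong:
  assumes "open S" "coord p \<in> S" "\<And>u. u \<in> S \<Longrightarrow> chart (H p) (H (chart_inv p u)) = \<phi> u"
  shows "sph_deriv H p D \<longleftrightarrow> (\<phi> has_field_derivative D) (at (coord p))"
  unfolding sph_deriv_def
proof
  assume "((\<lambda>u. chart (H p) (H (chart_inv p u))) has_field_derivative D) (at (coord p))"
  then show "(\<phi> has_field_derivative D) (at (coord p))"
    by (rule has_field_derivative_transform_within_open[OF _ assms(1,2)]) (simp add: assms(3))
next
  assume "(\<phi> has_field_derivative D) (at (coord p))"
  then show "((\<lambda>u. chart (H p) (H (chart_inv p u))) has_field_derivative D) (at (coord p))"
    by (rule has_field_derivative_transform_within_open[OF _ assms(1,2)]) (simp add: assms(3))
qed

lemma sph_closure_finite: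
  assumes "finite S"
  shows "sph_closure S \<subseteq> S"
proof
  fix q assume "q \<in> sph_closure S"
  then obtain s where s: "\<And>n. s n \<in> S" and conv: "sph_conv s q sequentially"
    unfolding sph_closure_def by blast
  define F where "F = {z. Some z \<in> S}"
  have fin: "finite F"
  proof -
    have "F \<subseteq> the ` S" unfolding F_def by (force)
    then show ?thesis using assms finite_surj by blast
  qed
  show "q \<in> S"
  proof (cases q)
    case None
    define M where "M = (\<Sum>z\<in>F. norm z)"
    have "eventually (\<lambda>n. case s n of None \<Rightarrow> True | Some z \<Rightarrow> M < norm z) sequentially"
      using conv None unfolding sph_conv_def by simp
    then obtain n where n: "case s n of None \<Rightarrow> True | Some z \<Rightarrow> M < norm z"
      unfolding eventually_sequentially by blast
    have "s n = None"
    proof (rule ccontr)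
      assume "s n \<noteq> None"
      then obtain z where z: "s n = Some z" by auto
      then have "z \<in> F" using s[of n] by (simp add: F_def)
      then have "norm z \<le> M" unfolding M_def using fin
        by (intro member_le_sum) auto
      with n z show False by simp
    qed
    then show ?thesis using s[of n] None by simp
  next
    case (Some d)
    obtain e where e: "e > 0" "\<forall>x\<in>F. x \<noteq> d \<longrightarrow> e \<le> dist d x"
      using finite_set_avoid[OF fin] by blast
    have "eventually (\<lambda>n. \<exists>z. s n = Some z \<and> dist z d < e) sequentially"
      using conv Some e unfolding sph_conv_def by simp
    then obtain n where "\<exists>z. s n = Some z \<and> dist z d < e"
      unfolding eventually_sequentially by blast
    then obtain z where z: "s n = Some z" "dist z d < e" by blast
    then have "z \<in> F" using s[of n] by (simp add: F_def)
    with e z have "z = d" by (metis dist_commute not_le)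
    then show ?thesis using z s[of n] Some by simp
  qed
qed


lemma Re_ofreal_mult: "Re (complex_of_real r * z) = r * Re z" by simp

locale cor =
  fixes P Q :: "complex poly" and l :: int
  assumes Q0: "Q \<noteq> 0" and cop: "coprime P Q" and Q00: "poly Q 0 \<noteq> 0"
    and deg: "degree P \<le> degree Q" and root: "\<exists>w. poly Q w = 0"
begin

abbreviation "R \<equiv> ratf P Q"
abbreviation "g \<equiv> gproj l P Q"
abbreviation "H \<equiv> sph_ext (gproj l P Q)"
definition "c2 = 2 * of_real pi * \<i>"
definition "Z = {w. poly Q w = 0}"
definition "G = {w. w \<noteq> 0 \<and> poly Q w \<noteq> 0}"
definition "Sf u = poly (monom 1 (degree Q - degree P) * reflect_poly P) u / poly (reflect_poly Q) u"

lemma c2_nz: "c2 \<noteq> 0" by (simp add: c2_def)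

lemma R_eq: "R = (\<lambda>w. poly P w / poly Q w)"
  by (simp add: fun_eq_iff ratf_def)

lemma g_eq: "g = (\<lambda>w. w powi l * exp (c2 * R w))"
  by (simp add: fun_eq_iff gproj_def c2_def)

lemma finZ: "finite Z" unfolding Z_def using poly_roots_finite[OF Q0] .

lemma Z0: "0 \<notin> Z" using Q00 by (simp add: Z_def)

lemma Zne: "Z \<noteq> {}" using root by (auto simp: Z_def)

lemma G_eq: "G = - (insert 0 Z)" by (auto simp: G_def Z_def)

lemma openG: "open G"
  unfolding G_eq by (rule open_Compl) (simp add: finite_imp_closed finZ)

lemma P_nz: assumes "w \<in> Z" shows "poly P w \<noteq> 0"
proof
  assume "poly P w = 0"
  then have "[:-w,1:] dvd P" "[:-w,1:] dvd Q" using assms by (auto simp: Z_def poly_eq_0_iff_dvd)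
  then have "is_unit [:-w,1:]" using cop coprime_common_divisor by blast
  then show False by (simp add: is_unit_poly_iff)
qed

lemma R_deriv: assumes "poly Q w \<noteq> 0"
  shows "(R has_field_derivative (poly (pderiv P) w * poly Q w - poly P w * poly (pderiv Q) w) / (poly Q w * poly Q w)) (at w)"
  unfolding R_eq by (rule DERIV_divide[OF poly_DERIV poly_DERIV assms])

lemma R_differentiable: "poly Q w \<noteq> 0 \<Longrightarrow> \<exists>D. (R has_field_derivative D) (at w)"
  using R_deriv by blast

lemma R_cont: "poly Q w \<noteq> 0 \<Longrightarrow> isCont R w"
  using R_deriv DERIV_isCont by blast

lemma expR_deriv:
  assumes "(R has_field_derivative D) (at w)"
  shows "((\<lambda>w. exp (c2 * R w)) has_field_derivative exp (c2 * R w) * (c2 * D)) (at w)"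
  by (rule DERIV_chain2[OF DERIV_exp DERIV_cmult[OF assms]])

lemma g_deriv:
  assumes "w \<noteq> 0 \<or> 0 \<le> l" "(R has_field_derivative D) (at w)"
  shows "(g has_field_derivative
     (of_int l * w powi (l - 1) * exp (c2 * R w) + w powi l * (exp (c2 * R w) * (c2 * D)))) (at w)"
proof -
  have "((\<lambda>w. w powi l) has_field_derivative of_int l * w powi (l - 1) * 1) (at w)"
    by (rule DERIV_power_int[OF DERIV_ident]) (use assms(1) in auto)
  from DERIV_mult[OF this expR_deriv[OF assms(2)]] show ?thesis
    unfolding g_eq by (simp add: mult.commute)
qed

lemma g_cont: assumes "w \<noteq> 0 \<or> 0 \<le> l" "poly Q w \<noteq> 0" shows "isCont g w"
  using g_deriv[OF assms(1)] R_differentiable[OF assms(2)] DERIV_isCont by blast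

lemma H_G: "w \<in> G \<Longrightarrow> H (Some w) = Some (g w)"
  by (rule sph_ext_Some_cont, rule g_cont) (auto simp: G_def)

lemma Sf_eq: assumes "u \<noteq> 0" shows "Sf u = R (inverse u)"
proof -
  have "Sf u = (u ^ (degree Q - degree P) * (u ^ degree P * poly P (inverse u))) / (u ^ degree Q * poly Q (inverse u))"
    unfolding Sf_def using assms by (simp add: poly_monom poly_reflect_poly_nz)
  also have "\<dots> = (u ^ degree Q * poly P (inverse u)) / (u ^ degree Q * poly Q (inverse u))"
    using deg by (simp add: mult.assoc[symmetric] power_add[symmetric])
  also have "\<dots> = R (inverse u)" using assms by (simp add: R_eq)
  finally show ?thesis .
qed

lemma revQ0: "poly (reflect_poly Q) 0 \<noteq> 0"
  using Q0 by (simp add: poly_0_coeff_0 coeff_0_reflect_poly)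

lemma Sf_deriv: assumes "poly (reflect_poly Q) u \<noteq> 0" shows "\<exists>D. (Sf has_field_derivative D) (at u)"
proof -
  have "\<exists>D. ((\<lambda>u. poly (monom 1 (degree Q - degree P) * reflect_poly P) u / poly (reflect_poly Q) u) has_field_derivative D) (at u)"
    using DERIV_divide[OF poly_DERIV poly_DERIV assms] by blast
  then show ?thesis unfolding Sf_def[abs_def] .
qed

lemma Sf_cont: "poly (reflect_poly Q) u \<noteq> 0 \<Longrightarrow> isCont Sf u"
  using Sf_deriv DERIV_isCont by blast

lemma R_tendsto_inf: "(R \<longlongrightarrow> Sf 0) at_infinity"
proof -
  have "((\<lambda>u. R (inverse u)) \<longlongrightarrow> Sf 0) (at 0)"
  proof (rule Lim_transform_eventually)
    show "(Sf \<longlongrightarrow> Sf 0) (at 0)" using Sf_cont[OF revQ0] by (simp add: isCont_def)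
    show "eventually (\<lambda>u. Sf u = R (inverse u)) (at 0)"
      by (auto simp: eventually_at_filter Sf_eq)
  qed
  then show ?thesis by (simp add: at_infinity_inv filterlim_filtermap o_def)
qed

lemma Lim_R: "Lim at_infinity R = Sf 0"
  by (rule tendsto_Lim[OF trivial_limit_at_infinity R_tendsto_inf])


lemma near_pole:
  assumes "w0 \<in> Z"
  obtains \<delta> where "\<delta> > 0" "\<And>w. w \<noteq> w0 \<Longrightarrow> dist w w0 < \<delta> \<Longrightarrow> w \<in> G"
proof -
  obtain \<delta> where d: "\<delta> > 0" "\<forall>x\<in>insert 0 Z. x \<noteq> w0 \<longrightarrow> \<delta> \<le> dist w0 x"
    using finite_set_avoid[of "insert 0 Z" w0] finZ by auto
  show ?thesis
  proof (rule that[OF d(1)])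
    fix w assume "w \<noteq> w0" "dist w w0 < \<delta>"
    then show "w \<in> G" using d(2) unfolding G_eq by (auto simp: dist_commute)
  qed
qed

lemma near_zero:
  obtains r0 where "r0 > 0" "\<And>w. norm w < r0 \<Longrightarrow> poly Q w \<noteq> 0"
proof -
  obtain \<delta> where d: "\<delta> > 0" "\<forall>x\<in>Z. x \<noteq> 0 \<longrightarrow> \<delta> \<le> dist 0 x"
    using finite_set_avoid[of Z 0] finZ by auto
  show ?thesis
  proof (rule that[OF d(1)])
    fix w :: complex assume "norm w < \<delta>"
    then show "poly Q w \<noteq> 0" using d(2) Z0 unfolding Z_def by force
  qed
qed

lemma near_inf:
  obtains ri where "ri > 0" "\<And>u. u \<noteq> 0 \<Longrightarrow> norm u < ri \<Longrightarrow> inverse u \<in> G"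
     "\<And>u. norm u < ri \<Longrightarrow> poly (reflect_poly Q) u \<noteq> 0"
proof -
  define M where "M = (\<Sum>z\<in>Z. norm z)"
  have M0: "M \<ge> 0" unfolding M_def by (simp add: sum_nonneg)
  have Mz: "norm z \<le> M" if "z \<in> Z" for z
    unfolding M_def using finZ that by (intro member_le_sum) auto
  define ri where "ri = 1 / (M + 1)"
  have ri: "ri > 0" using M0 by (simp add: ri_def)
  have inv: "inverse u \<in> G" if "u \<noteq> 0" "norm u < ri" for u
  proof -
    have nu: "norm u > 0" using that by simp
    have "norm u * (M + 1) < 1" using that(2) M0 by (simp add: ri_def pos_less_divide_eq)
    then have "M + 1 < 1 / norm u" using nu by (simp add: pos_less_divide_eq mult.commute)
    then have "M + 1 < norm (inverse u)" by (simp add: norm_divide inverse_eq_divide)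
    then have "inverse u \<notin> Z" using Mz by force
    then show ?thesis using that by (simp add: G_eq)
  qed
  show ?thesis
  proof (rule that[OF ri inv])
    fix u :: complex assume u: "norm u < ri"
    show "poly (reflect_poly Q) u \<noteq> 0"
    proof (cases "u = 0")
      case True then show ?thesis using revQ0 by simp
    next
      case False
      then have "poly Q (inverse u) \<noteq> 0" using inv[OF False u] by (simp add: G_def)
      then show ?thesis using False by (simp add: poly_reflect_poly_nz)
    qed
  qed
qed

lemma R_pole: assumes "w0 \<in> Z" shows "filterlim R at_infinity (at w0)"
proof -
  obtain \<delta> where d: "\<delta> > 0" "\<And>w. w \<noteq> w0 \<Longrightarrow> dist w w0 < \<delta> \<Longrightarrow> w \<in> G"
    using near_pole[OF assms] by blast
  have "filterlim (poly Q) (at 0) (at w0)"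
    unfolding filterlim_at
  proof
    show "eventually (\<lambda>w. poly Q w \<in> UNIV \<and> poly Q w \<noteq> 0) (at w0)"
      unfolding eventually_at using d by (auto simp: G_def intro!: exI[of _ \<delta>])
    have "(poly Q \<longlongrightarrow> poly Q w0) (at w0)" by (intro tendsto_intros)
    then show "(poly Q \<longlongrightarrow> 0) (at w0)" using assms by (simp add: Z_def)
  qed
  moreover have "(poly P \<longlongrightarrow> poly P w0) (at w0)" by (intro tendsto_intros)
  ultimately show ?thesis
    unfolding R_eq using filterlim_divide_at_infinity P_nz[OF assms] by blast
qed

lemma norm_g: "norm (g w) = norm w powi l * exp (Re (c2 * R w))"
  by (simp add: g_eq norm_mult norm_power_int norm_exp_eq_Re)

lemma inv_pow_at_top:
  assumes "m \<ge> 1"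
  shows "filterlim (\<lambda>t::real. inverse ((1 - t) ^ m)) at_top (at_left 1)"
proof -
  have "filterlim (\<lambda>t::real. (1 - t) ^ m) (at_right 0) (at_left 1)"
    unfolding filterlim_at
  proof
    show "eventually (\<lambda>t::real. (1 - t) ^ m \<in> {0<..} \<and> (1 - t) ^ m \<noteq> 0) (at_left 1)"
      by (rule eventually_at_left_1) simp
    have z: "(1 - 1 :: real) ^ m = 0" using assms by simp
    have "((\<lambda>t::real. (1 - t) ^ m) \<longlongrightarrow> (1 - 1) ^ m) (at_left 1)"
      by (intro tendsto_intros)
    then show "((\<lambda>t::real. (1 - t) ^ m) \<longlongrightarrow> 0) (at_left 1)" unfolding z .
  qed
  from filterlim_compose[OF filterlim_inverse_at_top_right this] show ?thesis .
qed

lemma path_core: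
  assumes "w0 \<in> Z" "y \<noteq> 0"
  obtains \<gamma> m \<kappa> K where
    "continuous_on {0..<1::real} \<gamma>" "\<And>t. t \<in> {0..<1} \<Longrightarrow> \<gamma> t \<in> G"
    "(\<gamma> \<longlongrightarrow> w0) (at_left 1)" "m \<ge> 1"
    "\<And>t. t \<in> {0..<1} \<Longrightarrow> Re (c2 * R (\<gamma> t)) = \<kappa> t * inverse ((1 - t) ^ m)"
    "(\<kappa> \<longlongrightarrow> K) (at_left 1)" "Re (c2 * y) < 0 \<Longrightarrow> K < 0" "Re (c2 * y) > 0 \<Longrightarrow> K > 0"
proof -
  obtain \<delta> where d: "\<delta> > 0" "\<And>w. w \<noteq> w0 \<Longrightarrow> dist w w0 < \<delta> \<Longrightarrow> w \<in> G"
    using near_pole[OF assms(1)] by blast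
  define m where "m = order w0 Q"
  have m1: "m \<ge> 1" using assms(1) Q0 order_root[of Q w0] by (simp add: Z_def m_def)
  obtain Q1 where Q1: "Q = [:-w0,1:] ^ m * Q1" "\<not> [:-w0,1:] dvd Q1"
    using order_decomp[OF Q0, of w0] m_def by blast
  have Q1w0: "poly Q1 w0 \<noteq> 0" using Q1(2) by (simp add: poly_eq_0_iff_dvd)
  define c where "c = poly P w0 / poly Q1 w0"
  have c0: "c \<noteq> 0" using P_nz[OF assms(1)] Q1w0 by (simp add: c_def)
  define d0 where "d0 = exp (Ln (c / y) / of_nat m)"
  have d0m: "d0 ^ m = c / y"
  proof -
    have "d0 ^ m = exp (of_nat m * (Ln (c / y) / of_nat m))"
      unfolding d0_def by (rule exp_of_nat_mult[symmetric])
    also have "\<dots> = exp (Ln (c / y))" using m1 by simp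
    also have "\<dots> = c / y" using c0 assms(2) by simp
    finally show ?thesis .
  qed
  have d00: "d0 \<noteq> 0" unfolding d0_def by simp
  define \<rho> where "\<rho> = \<delta> / (2 * norm d0)"
  have \<rho>: "\<rho> > 0" using d(1) d00 by (simp add: \<rho>_def)
  define d where "d = of_real \<rho> * d0"
  have "norm d = \<rho> * norm d0" using \<rho> by (simp add: d_def norm_mult)
  also have "\<dots> = \<delta> / 2" using d00 by (simp add: \<rho>_def)
  finally have nd: "norm d < \<delta>" using d(1) by simp
  have dnz: "d \<noteq> 0" using \<rho> d00 by (simp add: d_def)
  have cdm: "c / d ^ m = y / of_real (\<rho> ^ m)"
    using d0m \<rho> d00 c0 assms(2) by (simp add: d_def power_mult_distrib field_simps)
  define \<gamma> where "\<gamma> t = w0 + of_real (1 - t) * d" for t :: real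
  define h where "h t = poly P (\<gamma> t) / (d ^ m * poly Q1 (\<gamma> t))" for t
  define \<kappa> where "\<kappa> t = Re (c2 * h t)" for t
  define K where "K = Re (c2 * y) / \<rho> ^ m"
  show ?thesis
  proof (rule that[of \<gamma> m \<kappa> K])
    show "continuous_on {0..<1} \<gamma>" unfolding \<gamma>_def by (intro continuous_intros)
    show "m \<ge> 1" by (rule m1)
    show "\<gamma> t \<in> G" if "t \<in> {0..<1}" for t
    proof (rule d(2))
      show "\<gamma> t \<noteq> w0" using that dnz by (simp add: \<gamma>_def)
      have "dist (\<gamma> t) w0 = norm (of_real (1 - t) * d)" by (simp add: \<gamma>_def dist_norm)
      also have "\<dots> = (1 - t) * norm d" using that by (simp only: norm_mult norm_of_real) simp
      also have "\<dots> \<le> norm d" using that by (simp add: mult_left_le_one_le)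
      finally show "dist (\<gamma> t) w0 < \<delta>" using nd by simp
    qed
    have "(\<gamma> \<longlongrightarrow> w0 + of_real (1 - 1) * d) (at_left 1)"
      unfolding \<gamma>_def by (intro tendsto_intros)
    then show "(\<gamma> \<longlongrightarrow> w0) (at_left 1)" by simp
    show "Re (c2 * R (\<gamma> t)) = \<kappa> t * inverse ((1 - t) ^ m)" if "t \<in> {0..<1}" for t
    proof -
      have "poly Q (\<gamma> t) = of_real ((1 - t) ^ m) * (d ^ m * poly Q1 (\<gamma> t))"
        by (simp add: Q1(1) \<gamma>_def power_mult_distrib poly_power)
      then have "R (\<gamma> t) = h t / of_real ((1 - t) ^ m)"
        by (simp add: R_eq h_def field_simps)
      then have "c2 * R (\<gamma> t) = of_real (inverse ((1 - t) ^ m)) * (c2 * h t)"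
        by (simp add: field_simps)
      then have "Re (c2 * R (\<gamma> t)) = Re (of_real (inverse ((1 - t) ^ m)) * (c2 * h t))" by (simp only:)
      also have "\<dots> = inverse ((1 - t) ^ m) * \<kappa> t" unfolding \<kappa>_def by (rule Re_ofreal_mult)
      finally show ?thesis by simp
    qed
    have "(h \<longlongrightarrow> poly P w0 / (d ^ m * poly Q1 w0)) (at_left 1)"
      unfolding h_def
      by (intro tendsto_intros \<open>(\<gamma> \<longlongrightarrow> w0) (at_left 1)\<close>) (use dnz Q1w0 in simp)
    moreover have "poly P w0 / (d ^ m * poly Q1 w0) = y / of_real (\<rho> ^ m)"
      using cdm by (simp add: c_def field_simps)
    ultimately have "(h \<longlongrightarrow> y / of_real (\<rho> ^ m)) (at_left 1)" by simp
    then have "(\<kappa> \<longlongrightarrow> Re (c2 * (y / of_real (\<rho> ^ m)))) (at_left 1)"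
      unfolding \<kappa>_def by (intro tendsto_intros)
    moreover have "Re (c2 * (y / of_real (\<rho> ^ m))) = K"
      by (simp add: K_def Re_divide_of_real mult.assoc[symmetric])
    ultimately show "(\<kappa> \<longlongrightarrow> K) (at_left 1)" by simp
    show "Re (c2 * y) < 0 \<Longrightarrow> K < 0" using \<rho> by (simp add: K_def divide_neg_pos)
    show "Re (c2 * y) > 0 \<Longrightarrow> K > 0" using \<rho> by (simp add: K_def)
  qed
qed


lemma ev_at_left_01: "eventually (\<lambda>t::real. t \<in> {0..<1}) (at_left 1)"
  by (rule eventually_at_left_1) simp

lemma neg_i_nz: "- \<i> \<noteq> 0" by simp

lemma path_zero:
  assumes "w0 \<in> Z"
  obtains \<gamma> where "continuous_on {0..<1::real} \<gamma>" "\<And>t. t \<in> {0..<1} \<Longrightarrow> \<gamma> t \<in> G"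
    "(\<gamma> \<longlongrightarrow> w0) (at_left 1)" "((\<lambda>t. g (\<gamma> t)) \<longlongrightarrow> 0) (at_left 1)"
proof -
  have y: "Re (c2 * \<i>) < 0" by (simp add: c2_def)
  obtain \<gamma> m \<kappa> K where p:
    "continuous_on {0..<1::real} \<gamma>" "\<And>t. t \<in> {0..<1} \<Longrightarrow> \<gamma> t \<in> G"
    "(\<gamma> \<longlongrightarrow> w0) (at_left 1)" "m \<ge> 1"
    "\<And>t. t \<in> {0..<1} \<Longrightarrow> Re (c2 * R (\<gamma> t)) = \<kappa> t * inverse ((1 - t) ^ m)"
    "(\<kappa> \<longlongrightarrow> K) (at_left 1)" and K: "Re (c2 * \<i>) < 0 \<Longrightarrow> K < 0" "Re (c2 * \<i>) > 0 \<Longrightarrow> K > 0"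
    by (rule path_core[OF assms complex_i_not_zero]) (rule that)
  have Kx: "K < 0" using K y by simp
  have fl: "filterlim (\<lambda>t. \<kappa> t * inverse ((1 - t) ^ m)) at_bot (at_left 1)"
    by (rule filterlim_tendsto_neg_mult_at_bot[OF p(6) Kx inv_pow_at_top[OF p(4)]])
  have ev: "eventually (\<lambda>t. Re (c2 * R (\<gamma> t)) = \<kappa> t * inverse ((1 - t) ^ m)) (at_left 1)"
    using ev_at_left_01 by (rule eventually_mono) (rule p(5))
  have "filterlim (\<lambda>t. Re (c2 * R (\<gamma> t))) at_bot (at_left 1)"
    using fl by (simp only: filterlim_cong[OF refl refl ev])
  then have e: "((\<lambda>t. exp (Re (c2 * R (\<gamma> t)))) \<longlongrightarrow> 0) (at_left 1)"
    by (rule filterlim_compose[OF exp_at_bot])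
  have w00: "w0 \<noteq> 0" using assms Z0 by auto
  have a: "((\<lambda>t. norm (\<gamma> t) powi l) \<longlongrightarrow> norm w0 powi l) (at_left 1)"
    by (rule tendsto_power_int[OF tendsto_norm[OF p(3)]]) (simp add: w00)
  have "((\<lambda>t. norm (\<gamma> t) powi l * exp (Re (c2 * R (\<gamma> t)))) \<longlongrightarrow> norm w0 powi l * 0) (at_left 1)"
    by (rule tendsto_mult[OF a e])
  then have "((\<lambda>t. norm (g (\<gamma> t))) \<longlongrightarrow> 0) (at_left 1)" by (simp add: norm_g)
  then have "((\<lambda>t. g (\<gamma> t)) \<longlongrightarrow> 0) (at_left 1)" by (simp add: tendsto_norm_zero_iff)
  then show ?thesis using p(1,2,3) by (intro that) auto
qed

lemma path_inf:
  assumes "w0 \<in> Z"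
  obtains \<gamma> where "continuous_on {0..<1::real} \<gamma>" "\<And>t. t \<in> {0..<1} \<Longrightarrow> \<gamma> t \<in> G"
    "(\<gamma> \<longlongrightarrow> w0) (at_left 1)" "filterlim (\<lambda>t. g (\<gamma> t)) at_infinity (at_left 1)"
proof -
  have y: "Re (c2 * (- \<i>)) > 0" by (simp add: c2_def)
  obtain \<gamma> m \<kappa> K where p:
    "continuous_on {0..<1::real} \<gamma>" "\<And>t. t \<in> {0..<1} \<Longrightarrow> \<gamma> t \<in> G"
    "(\<gamma> \<longlongrightarrow> w0) (at_left 1)" "m \<ge> 1"
    "\<And>t. t \<in> {0..<1} \<Longrightarrow> Re (c2 * R (\<gamma> t)) = \<kappa> t * inverse ((1 - t) ^ m)"
    "(\<kappa> \<longlongrightarrow> K) (at_left 1)" and K: "Re (c2 * - \<i>) < 0 \<Longrightarrow> K < 0" "Re (c2 * - \<i>) > 0 \<Longrightarrow> K > 0"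
    by (rule path_core[OF assms neg_i_nz]) (rule that)
  have Kx: "K > 0" using K y by simp
  have fl: "filterlim (\<lambda>t. \<kappa> t * inverse ((1 - t) ^ m)) at_top (at_left 1)"
    by (rule filterlim_tendsto_pos_mult_at_top[OF p(6) Kx inv_pow_at_top[OF p(4)]])
  have ev: "eventually (\<lambda>t. Re (c2 * R (\<gamma> t)) = \<kappa> t * inverse ((1 - t) ^ m)) (at_left 1)"
    using ev_at_left_01 by (rule eventually_mono) (rule p(5))
  have "filterlim (\<lambda>t. Re (c2 * R (\<gamma> t))) at_top (at_left 1)"
    using fl by (simp only: filterlim_cong[OF refl refl ev])
  then have e: "filterlim (\<lambda>t. exp (Re (c2 * R (\<gamma> t)))) at_top (at_left 1)"
    by (rule filterlim_compose[OF exp_at_top])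
  have w00: "w0 \<noteq> 0" using assms Z0 by auto
  have a: "((\<lambda>t. norm (\<gamma> t) powi l) \<longlongrightarrow> norm w0 powi l) (at_left 1)"
    by (rule tendsto_power_int[OF tendsto_norm[OF p(3)]]) (simp add: w00)
  have "filterlim (\<lambda>t. norm (\<gamma> t) powi l * exp (Re (c2 * R (\<gamma> t)))) at_top (at_left 1)"
    by (rule filterlim_tendsto_pos_mult_at_top[OF a _ e]) (simp add: w00)
  then have "filterlim (\<lambda>t. norm (g (\<gamma> t))) at_top (at_left 1)" by (simp add: norm_g)
  then have "filterlim (\<lambda>t. g (\<gamma> t)) at_infinity (at_left 1)"
    by (simp add: filterlim_at_infinity_conv_norm_at_top)
  then show ?thesis using p(1,2,3) by (intro that) auto
qed

lemma G_notZ: "w \<in> G \<Longrightarrow> w \<notin> Z" by (auto simp: G_def Z_def)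

lemma path_at:
  fixes \<gamma> :: "real \<Rightarrow> complex"
  assumes "w0 \<in> Z" "\<And>t. t \<in> {0..<1} \<Longrightarrow> \<gamma> t \<in> G" "(\<gamma> \<longlongrightarrow> w0) (at_left 1)"
  shows "filterlim \<gamma> (at w0) (at_left 1)"
proof -
  have "eventually (\<lambda>t. \<gamma> t \<noteq> w0) (at_left 1)"
    using ev_at_left_01
  proof eventually_elim
    case (elim t)
    then have "\<gamma> t \<notin> Z" using assms(2) G_notZ by blast
    then show ?case using assms(1) by blast
  qed
  then show ?thesis using assms(3) by (simp add: filterlim_at)
qed

lemma ess_pole: assumes "w0 \<in> Z" shows "ess_sing_at g (Some w0)"
proof -
  obtain \<delta> where d: "\<delta> > 0" "\<And>w. w \<noteq> w0 \<Longrightarrow> dist w w0 < \<delta> \<Longrightarrow> w \<in> G"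
    using near_pole[OF assms] by blast
  have op: "open (ball w0 \<delta> - {w0})" by (simp add: open_delete)
  have "g analytic_on ball w0 \<delta> - {w0}"
    unfolding analytic_on_open[OF op] holomorphic_on_open[OF op]
  proof (intro ballI)
    fix w assume "w \<in> ball w0 \<delta> - {w0}"
    then have "w \<in> G" using d(2) by (auto simp: dist_commute)
    then obtain D where "(R has_field_derivative D) (at w)" using R_differentiable by (auto simp: G_def)
    then show "\<exists>f'. (g has_field_derivative f') (at w)"
      using g_deriv \<open>w \<in> G\<close> by (auto simp: G_def)
  qed
  then have iso: "isolated_singularity_at g w0"
    unfolding isolated_singularity_at_def using d(1) by blast
  obtain \<gamma>0 where g0: "continuous_on {0..<1::real} \<gamma>0" "\<And>t. t \<in> {0..<1} \<Longrightarrow> \<gamma>0 t \<in> G"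
    "(\<gamma>0 \<longlongrightarrow> w0) (at_left 1)" "((\<lambda>t. g (\<gamma>0 t)) \<longlongrightarrow> 0) (at_left 1)"
    by (rule path_zero[OF assms]) (rule that)
  obtain \<gamma>1 where g1: "continuous_on {0..<1::real} \<gamma>1" "\<And>t. t \<in> {0..<1} \<Longrightarrow> \<gamma>1 t \<in> G"
    "(\<gamma>1 \<longlongrightarrow> w0) (at_left 1)" "filterlim (\<lambda>t. g (\<gamma>1 t)) at_infinity (at_left 1)"
    by (rule path_inf[OF assms]) (rule that)
  have "\<not> not_essential g w0"
  proof
    assume "not_essential g w0"
    then consider x where "(g \<longlongrightarrow> x) (at w0)" | "is_pole g w0"
      unfolding not_essential_def by blast
    then show False
    proof cases
      case (1 x)
      have "((\<lambda>t. g (\<gamma>1 t)) \<longlongrightarrow> x) (at_left 1)"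
        by (rule filterlim_compose[OF 1 path_at[OF assms g1(2,3)]])
      then show False using not_tendsto_and_filterlim_at_infinity[OF trivial_limit_at_left_real _ g1(4)]
        by blast
    next
      case 2
      have "filterlim (\<lambda>t. g (\<gamma>0 t)) at_infinity (at_left 1)"
        by (rule filterlim_compose[OF 2[unfolded is_pole_def] path_at[OF assms g0(2,3)]])
      then show False using not_tendsto_and_filterlim_at_infinity[OF trivial_limit_at_left_real g0(4)]
        by blast
    qed
  qed
  then show ?thesis using iso by (simp add: ess_sing_at_def)
qed

lemma powi_E_lim:
  fixes n :: int
  assumes "isCont E 0" "E 0 \<noteq> 0" "eventually (\<lambda>u. f u = u powi n * E u) (at 0)"
  shows "n \<ge> 0 \<Longrightarrow> (f \<longlongrightarrow> 0 powi n * E (0::complex)) (at 0)"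
    and "n < 0 \<Longrightarrow> filterlim f at_infinity (at 0)"
proof -
  have E: "(E \<longlongrightarrow> E 0) (at 0)" using assms(1) by (simp add: isCont_def)
  {
    assume "n \<ge> 0"
    have "((\<lambda>u. u powi n * E u) \<longlongrightarrow> 0 powi n * E 0) (at 0)"
      by (intro tendsto_mult E tendsto_power_int') (use \<open>n \<ge> 0\<close> in auto)
    then show "(f \<longlongrightarrow> 0 powi n * E (0::complex)) (at 0)"
      by (subst tendsto_cong[OF assms(3)])
  }
  {
    assume "n < 0"
    define k where "k = nat (- n)"
    have k: "k \<ge> 1" "n = - int k" using \<open>n < 0\<close> by (auto simp: k_def)
    have pw: "u powi n = inverse (u ^ k)" for u :: complex
      using k(2) by (simp add: power_int_minus power_int_of_nat)
    have "filterlim (\<lambda>u::complex. u ^ k) (at 0) (at 0)"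
      unfolding filterlim_at
    proof
      show "eventually (\<lambda>u::complex. u ^ k \<in> UNIV \<and> u ^ k \<noteq> 0) (at 0)"
        unfolding eventually_at by (auto intro!: exI[of _ 1])
      have z: "(0::complex) ^ k = 0" using k by simp
      have "((\<lambda>u::complex. u ^ k) \<longlongrightarrow> 0 ^ k) (at 0)" by (intro tendsto_intros)
      then show "((\<lambda>u::complex. u ^ k) \<longlongrightarrow> 0) (at 0)" unfolding z .
    qed
    then have "filterlim (\<lambda>u::complex. inverse (inverse (u ^ k))) (at 0) (at 0)" by simp
    then have "filterlim (\<lambda>u::complex. inverse (u ^ k)) at_infinity (at 0)"
      by (rule filterlim_inverse_at_iff[THEN iffD1])
    then have "filterlim (\<lambda>u. E u * inverse (u ^ k)) at_infinity (at 0)"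
      by (rule tendsto_mult_filterlim_at_infinity[OF E assms(2)])
    moreover have "eventually (\<lambda>u. E u * inverse (u ^ k) = f u) (at 0)"
      using assms(3) by eventually_elim (simp add: pw mult.commute)
    ultimately show "filterlim f at_infinity (at 0)"
      by (simp only: filterlim_cong[OF refl refl])
  }
qed


lemma E0_cont: "isCont (\<lambda>u. exp (c2 * R u)) 0"
  using R_cont[OF Q00] by (intro continuous_intros)

lemma Einf_cont: "isCont (\<lambda>u. exp (c2 * Sf u)) 0"
  using Sf_cont[OF revQ0] by (intro continuous_intros)

lemma g_at0: "eventually (\<lambda>u. g u = u powi l * exp (c2 * R u)) (at 0)"
  by (simp add: g_eq)

lemma g_atinf: "eventually (\<lambda>u. g (inverse u) = u powi (- l) * exp (c2 * Sf u)) (at 0)"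
  unfolding eventually_at_filter
  by (intro always_eventually allI impI) (simp add: g_eq Sf_eq power_int_inverse power_int_minus)

lemma g_pole0: "l < 0 \<Longrightarrow> filterlim g at_infinity (at 0)"
  by (rule powi_E_lim(2)[OF E0_cont _ g_at0]) auto

lemma g_poleinf: "l > 0 \<Longrightarrow> filterlim (\<lambda>u. g (inverse u)) at_infinity (at 0)"
  by (rule powi_E_lim(2)[OF Einf_cont _ g_atinf]) auto

lemma g_liminf: "l \<le> 0 \<Longrightarrow> ((\<lambda>u. g (inverse u)) \<longlongrightarrow> 0 powi (- l) * exp (c2 * Sf 0)) (at 0)"
  by (rule powi_E_lim(1)[OF Einf_cont _ g_atinf]) auto

lemma H0_pos: "l \<ge> 0 \<Longrightarrow> H (Some 0) = Some (g 0)"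
  by (rule sph_ext_Some_cont, rule g_cont) (auto simp: Q00)

lemma H0_neg: "l < 0 \<Longrightarrow> H (Some 0) = None"
  by (rule sph_ext_Some_pole[OF g_pole0])

lemma Hinf_pos: "l > 0 \<Longrightarrow> H None = None"
  by (rule sph_ext_None_pole[OF g_poleinf])

lemma Hinf_nonpos: "l \<le> 0 \<Longrightarrow> H None = Some (0 powi (- l) * exp (c2 * Sf 0))"
  by (rule sph_ext_None_lim[OF g_liminf])

lemma not_ess: assumes "p \<notin> Some ` Z" shows "\<not> ess_sing_at g p"
proof (cases p)
  case None
  have "not_essential (\<lambda>u. g (inverse u)) 0"
  proof (cases "l > 0")
    case True
    then show ?thesis using g_poleinf by (simp add: not_essential_def is_pole_def)
  next
    case False
    then show ?thesis using g_liminf unfolding not_essential_def by force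
  qed
  then show ?thesis using None by (simp add: ess_sing_at_def)
next
  case (Some w)
  then have w: "w \<notin> Z" using assms by auto
  have "not_essential g w"
  proof (cases "w \<noteq> 0 \<or> 0 \<le> l")
    case True
    then have "isCont g w" using w by (intro g_cont) (auto simp: Z_def)
    then show ?thesis unfolding not_essential_def isCont_def by blast
  next
    case False
    then show ?thesis using g_pole0 by (simp add: not_essential_def is_pole_def)
  qed
  then show ?thesis using Some by (simp add: ess_sing_at_def)
qed

lemma ess_eq: "ess_sings g = Some ` Z"
proof
  show "ess_sings g \<subseteq> Some ` Z" using not_ess unfolding ess_sings_def by blast
  show "Some ` Z \<subseteq> ess_sings g" using ess_pole unfolding ess_sings_def by blast
qed

lemma exp1_c2: "exp1 z = exp (c2 * z)" by (simp add: exp1_def c2_def)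

lemma exp1_at: "filterlim exp1 (at (exp1 z)) (at z)"
  unfolding filterlim_at
proof
  show "(exp1 \<longlongrightarrow> exp1 z) (at z)" unfolding exp1_def by (intro tendsto_intros)
  have "\<forall>x. x \<noteq> z \<and> dist x z < 1 \<longrightarrow> exp1 x \<noteq> exp1 z"
  proof (intro allI impI notI)
    fix x assume x: "x \<noteq> z \<and> dist x z < 1" and "exp1 x = exp1 z"
    then obtain n where n: "2 * of_real pi * \<i> * x = 2 * of_real pi * \<i> * z + of_real (of_int (2 * n) * pi) * \<i>"
      unfolding exp1_def exp_eq by blast
    then have "c2 * x = c2 * (z + of_int n)" by (simp add: c2_def algebra_simps)
    then have "x = z + of_int n" using c2_nz by simp
    then have "dist x z = \<bar>real_of_int n\<bar>" by (simp add: dist_norm)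
    with x have "n = 0" by linarith
    with \<open>x = z + of_int n\<close> x show False by simp
  qed
  then show "eventually (\<lambda>x. exp1 x \<in> UNIV \<and> exp1 x \<noteq> exp1 z) (at z)"
    unfolding eventually_at by (intro exI[of _ 1]) auto
qed

lemma fR_set: "{z. sph_ext (fR l P Q) (Some z) = None} = {z. exp1 z \<in> Z}"
proof (intro set_eqI iffI; simp)
  fix z assume z: "exp1 z \<in> Z"
  have "filterlim (\<lambda>x. R (exp1 x)) at_infinity (at z)"
    by (rule filterlim_compose[OF R_pole[OF z] exp1_at])
  then have "filterlim (\<lambda>x. of_int l * x + R (exp1 x)) at_infinity (at z)"
    by (intro tendsto_add_filterlim_at_infinity[OF tendsto_mult[OF tendsto_const tendsto_ident_at]])
  then show "sph_ext (fR l P Q) (Some z) = None"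
    by (intro sph_ext_Some_pole) (simp add: fR_def[abs_def])
next
  fix z assume z: "sph_ext (fR l P Q) (Some z) = None"
  show "exp1 z \<in> Z"
  proof (rule ccontr)
    assume "exp1 z \<notin> Z"
    then have "isCont R (exp1 z)" by (intro R_cont) (simp add: Z_def)
    then have "isCont (fR l P Q) z"
      unfolding fR_def[abs_def] exp1_def
      by (intro continuous_intros continuous_at_compose[of _ "\<lambda>z. exp (2 * of_real pi * \<i> * z)" R, unfolded o_def]) (simp_all add: exp1_def)
    then have "sph_ext (fR l P Q) (Some z) = Some (fR l P Q z)" by (rule sph_ext_Some_cont)
    with z show False by simp
  qed
qed

lemma exp1_Z: "exp1 ` {z. exp1 z \<in> Z} = Z"
proof
  show "exp1 ` {z. exp1 z \<in> Z} \<subseteq> Z" by auto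
  show "Z \<subseteq> exp1 ` {z. exp1 z \<in> Z}"
  proof
    fix w assume w: "w \<in> Z"
    then have "w \<noteq> 0" using Z0 by auto
    then have "exp1 (Ln w / c2) = w" using c2_nz by (simp add: exp1_c2)
    then show "w \<in> exp1 ` {z. exp1 z \<in> Z}" using w by (metis (mono_tags, lifting) image_eqI mem_Collect_eq)
  qed
qed

lemma ess_thm: "ess_sings g = Some ` exp1 ` {z. sph_ext (fR l P Q) (Some z) = None}"
  by (simp add: ess_eq fR_set exp1_Z)


lemma sph_conv_cong:
  assumes "eventually (\<lambda>x. s x = s' x) F" "sph_conv s q F"
  shows "sph_conv s' q F"
proof (cases q)
  case None
  show ?thesis unfolding sph_conv_def None
  proof (simp, intro allI)
    fix M
    have "eventually (\<lambda>x. case s x of None \<Rightarrow> True | Some z \<Rightarrow> M < norm z) F"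
      using assms(2) None unfolding sph_conv_def by simp
    with assms(1) show "eventually (\<lambda>x. case s' x of None \<Rightarrow> True | Some z \<Rightarrow> M < norm z) F"
      by eventually_elim simp
  qed
next
  case (Some d)
  show ?thesis unfolding sph_conv_def Some
  proof (simp, intro allI impI)
    fix e :: real assume "e > 0"
    then have "eventually (\<lambda>x. \<exists>z. s x = Some z \<and> dist z d < e) F"
      using assms(2) Some unfolding sph_conv_def by simp
    with assms(1) show "eventually (\<lambda>x. \<exists>z. s' x = Some z \<and> dist z d < e) F"
      by eventually_elim simp
  qed
qed

lemma R_cont_on: "continuous_on G R"
  by (rule continuous_at_imp_continuous_on) (auto intro!: R_cont simp: G_def)

lemma asym_sub:
  assumes "a \<in> asym_vals g" shows "a \<in> {Some 0, None}"
proof (rule ccontr)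
  assume na: "a \<notin> {Some 0, None}"
  then obtain d where ad: "a = Some d" "d \<noteq> 0" by (cases a) auto
  obtain \<gamma> :: "real \<Rightarrow> complex" and e where e: "e \<in> ess_sings g" and gc: "continuous_on {0..<1} \<gamma>"
    and gne: "\<forall>t\<in>{0..<1}. Some (\<gamma> t) \<notin> ess_sings g"
    and ge: "sph_conv (\<lambda>t. Some (\<gamma> t)) e (at_left 1)"
    and ga: "sph_conv (\<lambda>t. H (Some (\<gamma> t))) a (at_left 1)"
    using assms unfolding asym_vals_def by blast
  obtain w0 where w0: "w0 \<in> Z" "e = Some w0" using e ess_eq by auto
  have w00: "w0 \<noteq> 0" using w0 Z0 by auto
  have gt: "(\<gamma> \<longlongrightarrow> w0) (at_left 1)" using ge w0 sph_conv_Some_iff by metis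
  have gZ: "\<gamma> t \<notin> Z" if "t \<in> {0..<1}" for t using gne that ess_eq by auto
  obtain \<delta> where d: "\<delta> > 0" "\<And>w. w \<noteq> w0 \<Longrightarrow> dist w w0 < \<delta> \<Longrightarrow> w \<in> G"
    using near_pole[OF w0(1)] by blast
  have evd: "eventually (\<lambda>t. dist (\<gamma> t) w0 < \<delta>) (at_left 1)"
    using gt d(1) by (rule tendstoD)
  have evG: "eventually (\<lambda>t. t \<in> {0..<1} \<and> \<gamma> t \<in> G) (at_left 1)"
    using evd ev_at_left_01
  proof eventually_elim
    case (elim t)
    then show ?case using d(2) gZ w0(1) by metis
  qed
  have "eventually (\<lambda>t. H (Some (\<gamma> t)) = Some (g (\<gamma> t))) (at_left 1)"
    using evG by eventually_elim (simp add: H_G)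
  from sph_conv_cong[OF this ga[unfolded ad]]
  have gg: "((\<lambda>t. g (\<gamma> t)) \<longlongrightarrow> d) (at_left 1)" by (simp add: sph_conv_Some_iff)
  define d' where "d' = d / w0 powi l"
  have d'0: "d' \<noteq> 0" using ad w00 by (simp add: d'_def)
  define E where "E t = exp (c2 * R (\<gamma> t))" for t
  have "((\<lambda>t. g (\<gamma> t) / \<gamma> t powi l) \<longlongrightarrow> d') (at_left 1)"
    unfolding d'_def by (intro tendsto_divide gg tendsto_power_int gt) (use w00 in auto)
  moreover have "eventually (\<lambda>t. g (\<gamma> t) / \<gamma> t powi l = E t) (at_left 1)"
    using evG by eventually_elim (auto simp: g_eq E_def G_def)
  ultimately have Et: "(E \<longlongrightarrow> d') (at_left 1)" by (simp add: tendsto_cong)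
  have Eq: "((\<lambda>t. E t / d') \<longlongrightarrow> 1) (at_left 1)"
    using tendsto_divide[OF Et tendsto_const[of d'] d'0] d'0 by simp
  have evB: "eventually (\<lambda>t. dist (E t / d') 1 < 1/2) (at_left 1)"
    using Eq by (rule tendstoD) simp
  have gat: "filterlim \<gamma> (at w0) (at_left 1)"
    unfolding filterlim_at
  proof
    show "eventually (\<lambda>t. \<gamma> t \<in> UNIV \<and> \<gamma> t \<noteq> w0) (at_left 1)"
      using ev_at_left_01 by eventually_elim (use gZ w0(1) in blast)
  qed (rule gt)
  have Rinf: "filterlim (\<lambda>t. R (\<gamma> t)) at_infinity (at_left 1)"
    by (rule filterlim_compose[OF R_pole[OF w0(1)] gat])
  have cRinf: "filterlim (\<lambda>t. c2 * R (\<gamma> t)) at_infinity (at_left 1)"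
    by (rule tendsto_mult_filterlim_at_infinity[OF tendsto_const c2_nz Rinf])
  obtain b where b: "b < 1" "\<forall>t>b. t < 1 \<longrightarrow> (t \<in> {0..<1} \<and> \<gamma> t \<in> G) \<and> dist (E t / d') 1 < 1/2"
    using eventually_conj[OF evG evB] unfolding eventually_at_left_field by blast
  define T where "T = max b 0"
  define S where "S = {T<..<(1::real)}"
  have SG: "t \<in> {0..<1} \<and> \<gamma> t \<in> G \<and> dist (E t / d') 1 < 1/2" if "t \<in> S" for t
    using that b(2) by (auto simp: S_def T_def)
  have conn: "connected S" unfolding S_def by simp
  have cR: "continuous_on S (\<lambda>t. R (\<gamma> t))"
    by (rule continuous_on_compose2[OF R_cont_on continuous_on_subset[OF gc]]) (use SG in auto)
  have cE: "continuous_on S E" unfolding E_def by (intro continuous_intros cR)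
  have Re_pos: "Re (E t / d') > 0" if "t \<in> S" for t
  proof -
    have "\<bar>Re (E t / d') - 1\<bar> \<le> norm (E t / d' - 1)"
      by (metis abs_Re_le_cmod minus_complex.simps(1) one_complex.simps(1))
    then show ?thesis using SG[OF that] by (simp add: dist_norm) linarith
  qed
  have nR: "E t / d' \<notin> \<real>\<^sub>\<le>\<^sub>0" if "t \<in> S" for t
    using Re_pos[OF that] by (auto simp: complex_nonpos_Reals_iff)
  define v where "v t = c2 * R (\<gamma> t) - Ln (E t / d')" for t
  have cv: "continuous_on S v"
    unfolding v_def by (intro continuous_intros cR continuous_on_Ln' cE) (use nR in auto)
  have ev: "exp (v t) = d'" if "t \<in> S" for t
  proof -
    have "E t / d' \<noteq> 0" using d'0 by (simp add: E_def)
    then have "exp (Ln (E t / d')) = E t / d'" by simp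
    moreover have "E t \<noteq> 0" by (simp add: E_def)
    ultimately show ?thesis using d'0 by (simp add: v_def exp_diff E_def[symmetric])
  qed
  have "v constant_on S"
  proof (rule continuous_discrete_range_constant[OF conn cv])
    fix x assume x: "x \<in> S"
    show "\<exists>e>0. \<forall>y. y \<in> S \<and> v y \<noteq> v x \<longrightarrow> e \<le> norm (v y - v x)"
    proof (intro exI[of _ 1] conjI allI impI)
      fix y assume y: "y \<in> S \<and> v y \<noteq> v x"
      then have "exp (v y) = exp (v x)" using ev x by simp
      then obtain n where n: "v y = v x + of_real (of_int (2 * n) * pi) * \<i>" unfolding exp_eq by blast
      with y have "n \<noteq> 0" by auto
      then have "1 \<le> \<bar>real_of_int n\<bar>" by linarith
      moreover have "norm (v y - v x) = 2 * pi * \<bar>real_of_int n\<bar>"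
        using n by (simp add: norm_mult)
      ultimately show "1 \<le> norm (v y - v x)"
        using pi_gt3 by (smt (verit) mult_le_cancel_right1)
    qed simp
  qed
  then obtain v0 where v0: "\<And>t. t \<in> S \<Longrightarrow> v t = v0" unfolding constant_on_def by blast
  have evS: "eventually (\<lambda>t. t \<in> S) (at_left 1)"
    unfolding eventually_at_left_field S_def using b(1) by (intro exI[of _ T]) (auto simp: T_def)
  have "((\<lambda>t. v0 + Ln (E t / d')) \<longlongrightarrow> v0 + Ln 1) (at_left 1)"
    by (intro tendsto_intros tendsto_Ln[OF Eq]) simp
  moreover have "eventually (\<lambda>t. v0 + Ln (E t / d') = c2 * R (\<gamma> t)) (at_left 1)"
  proof (rule eventually_mono[OF evS])
    fix t assume "t \<in> S"
    from v0[OF this] show "v0 + Ln (E t / d') = c2 * R (\<gamma> t)" by (simp add: v_def algebra_simps)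
  qed
  ultimately have "((\<lambda>t. c2 * R (\<gamma> t)) \<longlongrightarrow> v0 + Ln 1) (at_left 1)"
    by (simp add: tendsto_cong)
  then show False
    using not_tendsto_and_filterlim_at_infinity[OF trivial_limit_at_left_real _ cRinf] by blast
qed


lemma asym_path:
  assumes "w0 \<in> Z" "continuous_on {0..<1::real} \<gamma>" "\<And>t. t \<in> {0..<1} \<Longrightarrow> \<gamma> t \<in> G"
    "(\<gamma> \<longlongrightarrow> w0) (at_left 1)" "sph_conv (\<lambda>t. Some (g (\<gamma> t))) a (at_left 1)"
  shows "a \<in> asym_vals g"
  unfolding asym_vals_def
proof (intro CollectI exI[of _ \<gamma>] exI[of _ "Some w0"] conjI ballI)
  show "Some w0 \<in> ess_sings g" using assms(1) ess_eq by simp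
  show "continuous_on {0..<1} \<gamma>" by (rule assms(2))
  show "Some (\<gamma> t) \<notin> ess_sings g" if "t \<in> {0..<1}" for t
    using G_notZ[OF assms(3)[OF that]] ess_eq by auto
  show "sph_conv (\<lambda>t. Some (\<gamma> t)) (Some w0) (at_left 1)"
    using assms(4) by (simp add: sph_conv_Some_iff)
  have "eventually (\<lambda>t. Some (g (\<gamma> t)) = H (Some (\<gamma> t))) (at_left 1)"
    using ev_at_left_01 by eventually_elim (simp add: H_G assms(3))
  then show "sph_conv (\<lambda>t. H (Some (\<gamma> t))) a (at_left 1)"
    by (rule sph_conv_cong) (rule assms(5))
qed

lemma asym_eq: "asym_vals g = {Some 0, None}"
proof
  show "asym_vals g \<subseteq> {Some 0, None}" using asym_sub by blast
  obtain w0 where w0: "w0 \<in> Z" using root by (auto simp: Z_def)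
  obtain \<gamma>0 where g0: "continuous_on {0..<1::real} \<gamma>0" "\<And>t. t \<in> {0..<1} \<Longrightarrow> \<gamma>0 t \<in> G"
    "(\<gamma>0 \<longlongrightarrow> w0) (at_left 1)" "((\<lambda>t. g (\<gamma>0 t)) \<longlongrightarrow> 0) (at_left 1)"
    by (rule path_zero[OF w0]) (rule that)
  obtain \<gamma>1 where g1: "continuous_on {0..<1::real} \<gamma>1" "\<And>t. t \<in> {0..<1} \<Longrightarrow> \<gamma>1 t \<in> G"
    "(\<gamma>1 \<longlongrightarrow> w0) (at_left 1)" "filterlim (\<lambda>t. g (\<gamma>1 t)) at_infinity (at_left 1)"
    by (rule path_inf[OF w0]) (rule that)
  have "Some 0 \<in> asym_vals g"
    by (rule asym_path[OF w0 g0(1,2,3)]) (assumption, rule sph_conv_Some_iff[THEN iffD2, OF g0(4)])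
  moreover have "None \<in> asym_vals g"
    by (rule asym_path[OF w0 g1(1,2,3)]) (assumption, rule sph_conv_None_iff[THEN iffD2, OF g1(4)])
  ultimately show "{Some 0, None} \<subseteq> asym_vals g" by blast
qed


definition "Nq = pderiv P * Q - P * pderiv Q"
definition "Cp = smult (of_int l) (Q * Q) + smult c2 ([:0, 1:] * Nq)"

lemma dvd_cancel_nonroot:
  fixes A B :: "complex poly"
  assumes "[:-a,1:] ^ n dvd A * B" "poly A a \<noteq> 0"
  shows "[:-a,1:] ^ n dvd B"
proof (cases "B = 0")
  case False
  have A0: "A \<noteq> 0" using assms(2) by auto
  then have AB: "A * B \<noteq> 0" using False by simp
  have "n \<le> order a (A * B)" using assms(1) AB order_divides by blast
  also have "\<dots> = order a B" using order_mult[OF AB] order_0I[OF assms(2)] by simp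
  finally show ?thesis using order_divides by blast
qed simp

lemma Cp_nz: "Cp \<noteq> 0"
proof
  assume C0: "Cp = 0"
  obtain w0 where w0: "w0 \<in> Z" using root by (auto simp: Z_def)
  have w00: "w0 \<noteq> 0" using w0 Z0 by auto
  define m where "m = order w0 Q"
  define q where "q = [:-w0,1:] ^ m"
  have qQ: "q dvd Q" unfolding q_def m_def by (rule order_1)
  have "q dvd Q * Q" using qQ by simp
  then have "q dvd smult (of_int l) (Q * Q)" by (rule dvd_smult)
  then have "q dvd - smult (of_int l) (Q * Q)" by simp
  moreover have "- smult (of_int l) (Q * Q) = smult c2 ([:0, 1:] * Nq)"
    using C0 unfolding Cp_def by (metis add.commute eq_neg_iff_add_eq_0)
  ultimately have "q dvd smult c2 ([:0, 1:] * Nq)" by simp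
  then have "q dvd [:0, 1:] * Nq" by (rule dvd_smult_cancel) (rule c2_nz)
  then have qN: "q dvd Nq" unfolding q_def by (rule dvd_cancel_nonroot) (simp add: w00)
  have "q dvd pderiv P * Q" using qQ by simp
  then have "q dvd pderiv P * Q - Nq" using qN by (rule dvd_diff)
  then have "q dvd P * pderiv Q" by (simp add: Nq_def)
  then have qQ': "q dvd pderiv Q" unfolding q_def by (rule dvd_cancel_nonroot) (rule P_nz[OF w0])
  have ord: "m = Suc (order w0 (pderiv Q))"
    using order_pderiv[OF Q0] w0 by (simp add: Z_def m_def)
  show False
  proof (cases "pderiv Q = 0")
    case True
    then have "degree Q = 0" by (simp add: pderiv_eq_0_iff)
    then obtain c where "Q = [:c:]" by (metis degree_eq_zeroE)
    moreover have "poly Q w0 = 0" using w0 by (simp add: Z_def)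
    ultimately show False using Q0 by simp
  next
    case False
    then have "m \<le> order w0 (pderiv Q)" using qQ' order_divides unfolding q_def by blast
    then show False using ord by simp
  qed
qed

lemma poly_Cp: "poly Cp w = of_int l * (poly Q w * poly Q w) + c2 * (w * (poly (pderiv P) w * poly Q w - poly P w * poly (pderiv Q) w))"
  by (simp add: Cp_def Nq_def)

lemma crit_G:
  assumes w: "w \<in> G" and cr: "crit_pt H (Some w)"
  shows "poly Cp w = 0"
proof -
  have w0: "w \<noteq> 0" and Qw: "poly Q w \<noteq> 0" using w by (auto simp: G_def)
  have "sph_deriv H (Some w) 0 \<longleftrightarrow> (g has_field_derivative 0) (at (coord (Some w)))"
  proof (rule sph_deriv_cong[OF openG])
    show "coord (Some w) \<in> G" using w by (simp add: coord_def)
    fix u assume "u \<in> G"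
    then show "chart (H (Some w)) (H (chart_inv (Some w) u)) = g u"
      using w by (simp add: H_G chart_def chart_inv_def)
  qed
  then have d0: "(g has_field_derivative 0) (at w)" using cr by (simp add: crit_pt_def coord_def)
  define D where "D = (poly (pderiv P) w * poly Q w - poly P w * poly (pderiv Q) w) / (poly Q w * poly Q w)"
  define E where "E = exp (c2 * R w)"
  have "(g has_field_derivative (of_int l * w powi (l - 1) * E + w powi l * (E * (c2 * D)))) (at w)"
    unfolding E_def D_def by (rule g_deriv[OF _ R_deriv[OF Qw]]) (simp add: w0)
  from DERIV_unique[OF this d0] have "of_int l * w powi (l - 1) * E + w powi l * (E * (c2 * D)) = 0" .
  moreover have "w powi l = w powi (l - 1) * w"
    using power_int_add_1[of w "l - 1"] w0 by simp
  ultimately have "w powi (l - 1) * E * (of_int l + w * c2 * D) = 0" by (simp add: algebra_simps)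
  moreover have "w powi (l - 1) \<noteq> 0" using w0 by simp
  moreover have "E \<noteq> 0" by (simp add: E_def)
  ultimately have "of_int l + w * c2 * D = 0" using w0 by simp
  moreover have "(of_int l + w * c2 * D) * (poly Q w * poly Q w) = poly Cp w"
    unfolding poly_Cp D_def using Qw by (simp add: field_simps)
  ultimately show ?thesis by simp
qed

lemma crit_set_fin: "finite {p. p \<notin> ess_sings g \<and> crit_pt H p}"
proof (rule finite_subset)
  show "{p. p \<notin> ess_sings g \<and> crit_pt H p} \<subseteq> {None, Some 0} \<union> Some ` {w. poly Cp w = 0}"
  proof
    fix p assume p: "p \<in> {p. p \<notin> ess_sings g \<and> crit_pt H p}"
    show "p \<in> {None, Some 0} \<union> Some ` {w. poly Cp w = 0}"
    proof (cases p)
      case (Some w)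
      show ?thesis
      proof (cases "w = 0")
        case False
        have "w \<notin> Z" using p Some ess_eq by auto
        then have "w \<in> G" using False by (simp add: G_eq)
        then have "poly Cp w = 0" using crit_G p Some by auto
        then show ?thesis using Some by auto
      qed (simp add: Some)
    qed simp
  qed
  show "finite ({None, Some 0} \<union> Some ` {w. poly Cp w = 0})"
    using poly_roots_finite[OF Cp_nz] by simp
qed

lemma finite_type_thm: "finite_type g"
proof -
  have "crit_vals g = H ` {p. p \<notin> ess_sings g \<and> crit_pt H p}"
    unfolding crit_vals_def by blast
  then have "finite (crit_vals g)" using crit_set_fin by simp
  then have fin: "finite (crit_vals g \<union> asym_vals g)" by (simp add: asym_eq)
  show ?thesis unfolding finite_type_def
    by (rule finite_subset[OF sph_closure_finite[OF fin] fin])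
qed


definition "r0 = (SOME r. r > 0 \<and> (\<forall>w. norm w < r \<longrightarrow> poly Q w \<noteq> 0))"
definition "ri = (SOME r. r > 0 \<and> (\<forall>u. u \<noteq> 0 \<longrightarrow> norm u < r \<longrightarrow> inverse u \<in> G) \<and>
     (\<forall>u. norm u < r \<longrightarrow> poly (reflect_poly Q) u \<noteq> 0))"

lemma r0_prop: "r0 > 0 \<and> (\<forall>w. norm w < r0 \<longrightarrow> poly Q w \<noteq> 0)"
proof -
  obtain r where "r > 0" "\<And>w. norm w < r \<Longrightarrow> poly Q w \<noteq> 0" by (rule near_zero) (rule that)
  then have "\<exists>r. r > 0 \<and> (\<forall>w. norm w < r \<longrightarrow> poly Q w \<noteq> 0)" by blast
  then show ?thesis unfolding r0_def by (rule someI_ex)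
qed

lemma r0_pos: "r0 > 0" and r0_Q: "norm w < r0 \<Longrightarrow> poly Q w \<noteq> 0"
  using r0_prop by auto

lemma ri_prop: "ri > 0 \<and> (\<forall>u. u \<noteq> 0 \<longrightarrow> norm u < ri \<longrightarrow> inverse u \<in> G) \<and>
     (\<forall>u. norm u < ri \<longrightarrow> poly (reflect_poly Q) u \<noteq> 0)"
proof -
  obtain r where "r > 0" "\<And>u. u \<noteq> 0 \<Longrightarrow> norm u < r \<Longrightarrow> inverse u \<in> G"
     "\<And>u. norm u < r \<Longrightarrow> poly (reflect_poly Q) u \<noteq> 0" by (rule near_inf) (rule that)
  then have "\<exists>r. r > 0 \<and> (\<forall>u. u \<noteq> 0 \<longrightarrow> norm u < r \<longrightarrow> inverse u \<in> G) \<and>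
     (\<forall>u. norm u < r \<longrightarrow> poly (reflect_poly Q) u \<noteq> 0)" by blast
  then show ?thesis unfolding ri_def by (rule someI_ex)
qed

lemma ri_pos: "ri > 0" and ri_G: "u \<noteq> 0 \<Longrightarrow> norm u < ri \<Longrightarrow> inverse u \<in> G"
  and ri_Q: "norm u < ri \<Longrightarrow> poly (reflect_poly Q) u \<noteq> 0"
  using ri_prop by auto

lemma g_inv_eq: "u \<noteq> 0 \<Longrightarrow> g (inverse u) = u powi (- l) * exp (c2 * Sf u)"
  by (simp add: g_eq Sf_eq power_int_inverse power_int_minus)

lemma H_inv: "u \<noteq> 0 \<Longrightarrow> norm u < ri \<Longrightarrow> H (Some (inverse u)) = Some (g (inverse u))"
  by (rule H_G[OF ri_G])

lemma H_small: "0 \<le> l \<Longrightarrow> norm u < r0 \<Longrightarrow> H (Some u) = Some (g u)"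
  by (rule sph_ext_Some_cont, rule g_cont) (use r0_Q[of u] in auto)

lemma H_small': "u \<noteq> 0 \<Longrightarrow> norm u < r0 \<Longrightarrow> H (Some u) = Some (g u)"
  by (rule H_G) (use r0_Q[of u] in \<open>auto simp: G_def\<close>)

lemma coord_Some: "coord (Some c) = c" by (simp add: coord_def)
lemma coord_None: "coord None = 0" by (simp add: coord_def)

lemma sd_fin:
  assumes "l \<ge> 0" shows "sph_deriv H (Some 0) D \<longleftrightarrow> (g has_field_derivative D) (at 0)"
  using sph_deriv_cong[of "ball 0 r0" "Some 0" H g D] r0_pos
  by (simp add: coord_Some chart_def chart_inv_def H_small[OF assms])

lemma sd_inf_pole:
  assumes "l > 0"
  shows "sph_deriv H None D \<longleftrightarrow> ((\<lambda>u. u powi l * exp (- (c2 * Sf u))) has_field_derivative D) (at 0)"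
proof -
  have "sph_deriv H None D \<longleftrightarrow> ((\<lambda>u. u powi l * exp (- (c2 * Sf u))) has_field_derivative D) (at (coord None))"
  proof (rule sph_deriv_cong)
    show "coord None \<in> ball 0 ri" using ri_pos by (simp add: coord_None)
    fix u :: complex assume u: "u \<in> ball 0 ri"
    show "chart (H None) (H (chart_inv None u)) = u powi l * exp (- (c2 * Sf u))"
    proof (cases "u = 0")
      case True then show ?thesis using assms by (simp add: Hinf_pos chart_def chart_inv_def)
    next
      case False
      then show ?thesis using u assms
        by (simp add: Hinf_pos chart_def chart_inv_def H_inv g_inv_eq exp_minus power_int_minus)
    qed
  qed simp
  then show ?thesis by (simp add: coord_None)
qed

lemma sd_0_pole:
  assumes "l < 0"
  shows "sph_deriv H (Some 0) D \<longleftrightarrow> ((\<lambda>u. u powi (- l) * exp (- (c2 * R u))) has_field_derivative D) (at 0)"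
proof -
  have H0: "H (Some 0) = None" by (rule H0_neg[OF assms])
  have "sph_deriv H (Some 0) D \<longleftrightarrow> ((\<lambda>u. u powi (- l) * exp (- (c2 * R u))) has_field_derivative D) (at (coord (Some 0)))"
  proof (rule sph_deriv_cong)
    show "coord (Some 0) \<in> ball 0 r0" using r0_pos by (simp add: coord_Some)
    fix u :: complex assume u: "u \<in> ball 0 r0"
    show "chart (H (Some 0)) (H (chart_inv (Some 0) u)) = u powi (- l) * exp (- (c2 * R u))"
    proof (cases "u = 0")
      case True then show ?thesis using assms by (simp add: H0 chart_def chart_inv_def)
    next
      case False
      have Hu: "H (Some u) = Some (g u)" by (rule H_small') (use False u in auto)
      have "inverse (g u) = u powi (- l) * exp (- (c2 * R u))"
        by (simp add: g_eq exp_minus power_int_minus)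
      then show ?thesis by (simp add: H0 Hu chart_def chart_inv_def)
    qed
  qed simp
  then show ?thesis by (simp add: coord_Some)
qed

lemma sd_inf_fin:
  assumes "l = 0"
  shows "sph_deriv H None D \<longleftrightarrow> ((\<lambda>u. exp (c2 * Sf u)) has_field_derivative D) (at 0)"
proof -
  have HN: "H None = Some (exp (c2 * Sf 0))" using Hinf_nonpos[of] assms by simp
  have "sph_deriv H None D \<longleftrightarrow> ((\<lambda>u. exp (c2 * Sf u)) has_field_derivative D) (at (coord None))"
  proof (rule sph_deriv_cong)
    show "coord None \<in> ball 0 ri" using ri_pos by (simp add: coord_None)
    fix u :: complex assume u: "u \<in> ball 0 ri"
    show "chart (H None) (H (chart_inv None u)) = exp (c2 * Sf u)"
    proof (cases "u = 0")
      case True then show ?thesis by (simp add: HN chart_def chart_inv_def)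
    next
      case False
      have Hu: "H (Some (inverse u)) = Some (g (inverse u))" by (rule H_inv) (use False u in auto)
      have "g (inverse u) = exp (c2 * Sf u)" using g_inv_eq[OF False] assms by simp
      then show ?thesis using False by (simp add: HN Hu chart_def chart_inv_def)
    qed
  qed simp
  then show ?thesis by (simp add: coord_None)
qed

lemma sdR_0: "sph_deriv (sph_ext R) (Some 0) D \<longleftrightarrow> (R has_field_derivative D) (at 0)"
proof -
  have "sph_deriv (sph_ext R) (Some 0) D \<longleftrightarrow> (R has_field_derivative D) (at (coord (Some 0)))"
  proof (rule sph_deriv_cong)
    show "coord (Some 0) \<in> ball 0 r0" using r0_pos by (simp add: coord_Some)
    fix u :: complex assume u: "u \<in> ball 0 r0"
    then have "sph_ext R (Some u) = Some (R u)" "sph_ext R (Some 0) = Some (R 0)"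
      using r0_Q r0_pos by (auto intro!: sph_ext_Some_cont R_cont)
    then show "chart (sph_ext R (Some 0)) (sph_ext R (chart_inv (Some 0) u)) = R u"
      by (simp add: chart_def chart_inv_def)
  qed simp
  then show ?thesis by (simp add: coord_Some)
qed

lemma sdR_inf: "sph_deriv (sph_ext R) None D \<longleftrightarrow> (Sf has_field_derivative D) (at 0)"
proof -
  have RN: "sph_ext R None = Some (Sf 0)"
  proof (rule sph_ext_None_lim)
    show "((\<lambda>u. R (inverse u)) \<longlongrightarrow> Sf 0) (at 0)"
    proof (rule Lim_transform_eventually)
      show "(Sf \<longlongrightarrow> Sf 0) (at 0)" using Sf_cont[OF revQ0] by (simp add: isCont_def)
      show "eventually (\<lambda>u. Sf u = R (inverse u)) (at 0)"
        by (auto simp: eventually_at_filter Sf_eq)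
    qed
  qed
  have "sph_deriv (sph_ext R) None D \<longleftrightarrow> (Sf has_field_derivative D) (at (coord None))"
  proof (rule sph_deriv_cong)
    show "coord None \<in> ball 0 ri" using ri_pos by (simp add: coord_None)
    fix u :: complex assume u: "u \<in> ball 0 ri"
    show "chart (sph_ext R None) (sph_ext R (chart_inv None u)) = Sf u"
    proof (cases "u = 0")
      case True then show ?thesis by (simp add: RN chart_def chart_inv_def)
    next
      case False
      then have "inverse u \<in> G" using u ri_G by simp
      then have "sph_ext R (Some (inverse u)) = Some (R (inverse u))"
        by (intro sph_ext_Some_cont R_cont) (simp add: G_def)
      then show ?thesis using False by (simp add: RN chart_def chart_inv_def Sf_eq)
    qed
  qed simp
  then show ?thesis by (simp add: coord_None)
qed

lemma deriv_powexp:
  fixes F :: "complex \<Rightarrow> complex"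
  assumes "(F has_field_derivative DF) (at 0)" "k \<ge> 1"
  shows "((\<lambda>u. u powi k * exp (s * F u)) has_field_derivative (if k = 1 then exp (s * F 0) else 0)) (at 0)"
proof -
  have p: "((\<lambda>u::complex. u powi k) has_field_derivative of_int k * 0 powi (k - 1) * 1) (at 0)"
    by (rule DERIV_power_int[OF DERIV_ident]) (use assms(2) in simp)
  have e: "((\<lambda>u. exp (s * F u)) has_field_derivative exp (s * F 0) * (s * DF)) (at 0)"
    by (rule DERIV_chain2[OF DERIV_exp DERIV_cmult[OF assms(1)]])
  have eq: "of_int k * 0 powi (k - 1) * 1 * exp (s * F 0) + exp (s * F 0) * (s * DF) * 0 powi k =
      (if k = 1 then exp (s * F 0) else 0)" using assms(2) by (auto simp: power_int_0_left_if)
  from DERIV_mult[OF p e] show ?thesis unfolding eq .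
qed


lemma R_d0: obtains DR where "(R has_field_derivative DR) (at 0)"
  using R_differentiable[OF Q00] by blast

lemma Sf_d0: obtains DS where "(Sf has_field_derivative DS) (at 0)"
  using Sf_deriv[OF revQ0] by blast

lemma g_fun: "g = (\<lambda>u. u powi l * exp (c2 * R u))" by (rule g_eq)

lemma inf_fun: "(\<lambda>u. u powi k * exp (- (c2 * F u))) = (\<lambda>u. u powi k * exp ((- c2) * F u))"
  by simp

lemma g0_pos: "l \<ge> 1 \<Longrightarrow> g 0 = 0" by (simp add: g_eq)

lemma case_l1:
  assumes "l = 1"
  shows "H (Some 0) = Some 0
        \<and> sph_deriv H (Some 0) (exp (2 * of_real pi * \<i> * R 0))
        \<and> H None = None
        \<and> sph_deriv H None (exp (- 2 * of_real pi * \<i> * Lim at_infinity R))"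
proof (intro conjI)
  show "H (Some 0) = Some 0" using H0_pos g0_pos assms by simp
  obtain DR where DR: "(R has_field_derivative DR) (at 0)" by (rule R_d0)
  have "(g has_field_derivative exp (c2 * R 0)) (at 0)"
    unfolding g_fun using deriv_powexp[OF DR, of l c2] assms by simp
  then show "sph_deriv H (Some 0) (exp (2 * of_real pi * \<i> * R 0))"
    using sd_fin assms by (simp add: c2_def)
  show "H None = None" using Hinf_pos assms by simp
  obtain DS where DS: "(Sf has_field_derivative DS) (at 0)" by (rule Sf_d0)
  have "((\<lambda>u. u powi l * exp (- (c2 * Sf u))) has_field_derivative exp (- c2 * Sf 0)) (at 0)"
    unfolding inf_fun using deriv_powexp[OF DS, of l "- c2"] assms by simp
  then show "sph_deriv H None (exp (- 2 * of_real pi * \<i> * Lim at_infinity R))"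
    using sd_inf_pole assms by (simp add: Lim_R c2_def)
qed

lemma case_l2:
  assumes "l \<ge> 2"
  shows "H (Some 0) = Some 0 \<and> crit_pt H (Some 0) \<and> H None = None \<and> crit_pt H None"
proof (intro conjI)
  show "H (Some 0) = Some 0" using H0_pos g0_pos assms by simp
  obtain DR where DR: "(R has_field_derivative DR) (at 0)" by (rule R_d0)
  have "(g has_field_derivative 0) (at 0)"
    unfolding g_fun using deriv_powexp[OF DR, of l c2] assms by simp
  then show "crit_pt H (Some 0)" using sd_fin assms by (simp add: crit_pt_def)
  show "H None = None" using Hinf_pos assms by simp
  obtain DS where DS: "(Sf has_field_derivative DS) (at 0)" by (rule Sf_d0)
  have "((\<lambda>u. u powi l * exp (- (c2 * Sf u))) has_field_derivative 0) (at 0)"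
    unfolding inf_fun using deriv_powexp[OF DS, of l "- c2"] assms by simp
  then show "crit_pt H None" using sd_inf_pole assms by (simp add: crit_pt_def)
qed

lemma case_lneg2:
  assumes "l \<le> -2"
  shows "H (Some 0) = None \<and> H None = Some 0 \<and> (crit_pt H (Some 0) \<or> crit_pt H None)"
proof (intro conjI disjI1)
  show "H (Some 0) = None" using H0_neg assms by simp
  show "H None = Some 0" using Hinf_nonpos[of] assms by (simp add: power_int_0_left_if)
  obtain DR where DR: "(R has_field_derivative DR) (at 0)" by (rule R_d0)
  have "((\<lambda>u. u powi (- l) * exp (- (c2 * R u))) has_field_derivative 0) (at 0)"
    unfolding inf_fun using deriv_powexp[OF DR, of "- l" "- c2"] assms by simp
  then show "crit_pt H (Some 0)" using sd_0_pole assms by (simp add: crit_pt_def)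
qed

lemma case_l0:
  assumes "l = 0"
  shows "(crit_pt H (Some 0) \<longleftrightarrow> sph_deriv (sph_ext R) (Some 0) 0)
        \<and> (crit_pt H None \<longleftrightarrow> sph_deriv (sph_ext R) None 0)"
proof (intro conjI)
  obtain DR where DR: "(R has_field_derivative DR) (at 0)" by (rule R_d0)
  have gd: "(g has_field_derivative exp (c2 * R 0) * (c2 * DR)) (at 0)"
  proof -
    have "g = (\<lambda>w. exp (c2 * R w))" unfolding g_fun using assms by simp
    then show ?thesis using expR_deriv[OF DR] by simp
  qed
  have "crit_pt H (Some 0) \<longleftrightarrow> (g has_field_derivative 0) (at 0)"
    using sd_fin assms by (simp add: crit_pt_def)
  also have "\<dots> \<longleftrightarrow> DR = 0"
  proof
    assume "(g has_field_derivative 0) (at 0)"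
    from DERIV_unique[OF gd this] show "DR = 0" using c2_nz by simp
  next
    assume "DR = 0" then show "(g has_field_derivative 0) (at 0)" using gd by simp
  qed
  also have "\<dots> \<longleftrightarrow> (R has_field_derivative 0) (at 0)"
    using DR DERIV_unique by blast
  also have "\<dots> \<longleftrightarrow> sph_deriv (sph_ext R) (Some 0) 0" using sdR_0 by simp
  finally show "crit_pt H (Some 0) \<longleftrightarrow> sph_deriv (sph_ext R) (Some 0) 0" .
  obtain DS where DS: "(Sf has_field_derivative DS) (at 0)" by (rule Sf_d0)
  have ed: "((\<lambda>u. exp (c2 * Sf u)) has_field_derivative exp (c2 * Sf 0) * (c2 * DS)) (at 0)"
    by (rule DERIV_chain2[OF DERIV_exp DERIV_cmult[OF DS]])
  have "crit_pt H None \<longleftrightarrow> ((\<lambda>u. exp (c2 * Sf u)) has_field_derivative 0) (at 0)"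
    using sd_inf_fin assms by (simp add: crit_pt_def)
  also have "\<dots> \<longleftrightarrow> DS = 0"
  proof
    assume "((\<lambda>u. exp (c2 * Sf u)) has_field_derivative 0) (at 0)"
    from DERIV_unique[OF ed this] show "DS = 0" using c2_nz by simp
  next
    assume "DS = 0" then show "((\<lambda>u. exp (c2 * Sf u)) has_field_derivative 0) (at 0)" using ed by simp
  qed
  also have "\<dots> \<longleftrightarrow> (Sf has_field_derivative 0) (at 0)"
    using DS DERIV_unique by blast
  also have "\<dots> \<longleftrightarrow> sph_deriv (sph_ext R) None 0" using sdR_inf by simp
  finally show "crit_pt H None \<longleftrightarrow> sph_deriv (sph_ext R) None 0" .
qed


lemma case_lm1:
  assumes "l = -1"
  shows "H (Some 0) = None \<and> H None = Some 0
        \<and> sph_deriv (H \<circ> H) (Some 0) (exp (2 * of_real pi * \<i> * (Lim at_infinity R - R 0)))"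
proof (intro conjI)
  show H0: "H (Some 0) = None" using H0_neg assms by simp
  show HN: "H None = Some 0" using Hinf_nonpos[of] assms by simp
  define \<psi> where "\<psi> u = u * exp (- (c2 * R u))" for u
  obtain DR where DR: "(R has_field_derivative DR) (at 0)" by (rule R_d0)
  obtain DS where DS: "(Sf has_field_derivative DS) (at 0)" by (rule Sf_d0)
  have e1: "((\<lambda>u. exp (- (c2 * R u))) has_field_derivative exp (- (c2 * R 0)) * (- (c2 * DR))) (at 0)"
    by (rule DERIV_chain2[OF DERIV_exp DERIV_minus[OF DERIV_cmult[OF DR]]])
  have \<psi>d: "(\<psi> has_field_derivative exp (- (c2 * R 0))) (at 0)"
  proof -
    from DERIV_mult[OF DERIV_ident e1]
    have "((\<lambda>u. u * exp (- (c2 * R u))) has_field_derivative 1 * exp (- (c2 * R 0)) + exp (- (c2 * R 0)) * (- (c2 * DR)) * 0) (at 0)" .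
    then show ?thesis unfolding \<psi>_def[abs_def] by simp
  qed
  have \<psi>0: "\<psi> 0 = 0" by (simp add: \<psi>_def)
  have \<psi>c: "isCont \<psi> 0" using \<psi>d DERIV_isCont by blast
  obtain \<epsilon> where \<epsilon>: "\<epsilon> > 0" "\<And>u. dist u 0 < \<epsilon> \<Longrightarrow> dist (\<psi> u) (\<psi> 0) < ri"
    using \<psi>c ri_pos unfolding continuous_at_eps_delta by blast
  define \<phi> where "\<phi> u = \<psi> u * exp (c2 * Sf (\<psi> u))" for u
  have DS': "(Sf has_field_derivative DS) (at (\<psi> 0))" using DS \<psi>0 by simp
  have e2: "((\<lambda>u. exp (c2 * Sf (\<psi> u))) has_field_derivative exp (c2 * Sf (\<psi> 0)) * (c2 * (DS * exp (- (c2 * R 0))))) (at 0)"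
    by (rule DERIV_chain2[OF DERIV_exp DERIV_cmult[OF DERIV_chain2[OF DS' \<psi>d]]])
  have \<phi>d: "(\<phi> has_field_derivative exp (2 * of_real pi * \<i> * (Lim at_infinity R - R 0))) (at 0)"
  proof -
    from DERIV_mult[OF \<psi>d e2]
    have "(\<phi> has_field_derivative exp (- (c2 * R 0)) * exp (c2 * Sf (\<psi> 0)) + exp (c2 * Sf (\<psi> 0)) * (c2 * (DS * exp (- (c2 * R 0)))) * \<psi> 0) (at 0)"
      unfolding \<phi>_def[abs_def] .
    moreover have "exp (- (c2 * R 0)) * exp (c2 * Sf (\<psi> 0)) + exp (c2 * Sf (\<psi> 0)) * (c2 * (DS * exp (- (c2 * R 0)))) * \<psi> 0
        = exp (2 * of_real pi * \<i> * (Lim at_infinity R - R 0))"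
      by (simp add: \<psi>0 Lim_R c2_def exp_add[symmetric] algebra_simps)
    ultimately show ?thesis by simp
  qed
  have "sph_deriv (H \<circ> H) (Some 0) (exp (2 * of_real pi * \<i> * (Lim at_infinity R - R 0)))
     \<longleftrightarrow> (\<phi> has_field_derivative exp (2 * of_real pi * \<i> * (Lim at_infinity R - R 0))) (at (coord (Some 0)))"
  proof (rule sph_deriv_cong[of "ball 0 (min \<epsilon> r0)"])
    show "coord (Some 0) \<in> ball 0 (min \<epsilon> r0)" using \<epsilon>(1) r0_pos by (simp add: coord_Some)
    fix u :: complex assume u: "u \<in> ball 0 (min \<epsilon> r0)"
    have HH0: "(H \<circ> H) (Some 0) = Some 0" by (simp add: H0 HN)
    show "chart ((H \<circ> H) (Some 0)) ((H \<circ> H) (chart_inv (Some 0) u)) = \<phi> u"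
    proof (cases "u = 0")
      case True then show ?thesis by (simp add: HH0 H0 HN chart_def chart_inv_def \<phi>_def \<psi>0)
    next
      case False
      have Hu: "H (Some u) = Some (g u)" by (rule H_small') (use False u in auto)
      have gu: "g u = inverse (\<psi> u)"
        unfolding g_fun \<psi>_def using assms by (simp add: exp_minus power_int_minus)
      have \<psi>nz: "\<psi> u \<noteq> 0" using False by (simp add: \<psi>_def)
      have \<psi>s: "norm (\<psi> u) < ri" using \<epsilon>(2)[of u] u \<psi>0 by (simp add: dist_norm)
      have Hgu: "H (Some (g u)) = Some (\<psi> u * exp (c2 * Sf (\<psi> u)))"
        unfolding gu using H_inv[OF \<psi>nz \<psi>s] g_inv_eq[OF \<psi>nz] assms by simp
      show ?thesis by (simp add: H0 HN Hu Hgu chart_def chart_inv_def \<phi>_def)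
    qed
  qed simp
  then show "sph_deriv (H \<circ> H) (Some 0) (exp (2 * of_real pi * \<i> * (Lim at_infinity R - R 0)))"
    using \<phi>d by (simp add: coord_Some)
qed

end

theorem corollary3p11:
  fixes P Q :: "complex poly" and l :: int
  assumes "Q \<noteq> 0" and "coprime P Q"
    and "poly Q 0 \<noteq> 0"
    and "degree P \<le> degree Q"
    and "\<exists>w. poly Q w = 0"
    and "\<not> (\<exists>c. \<forall>w. poly Q w \<noteq> 0 \<longrightarrow> ratf P Q w = c)"
  shows "finite_type (gproj l P Q)
    \<and> asym_vals (gproj l P Q) = {Some 0, None}
    \<and> ess_sings (gproj l P Q) = Some ` exp1 ` {z. sph_ext (fR l P Q) (Some z) = None}
    \<and> (l = 1 \<longrightarrow>
          sph_ext (gproj l P Q) (Some 0) = Some 0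
        \<and> sph_deriv (sph_ext (gproj l P Q)) (Some 0) (exp (2 * of_real pi * \<i> * ratf P Q 0))
        \<and> sph_ext (gproj l P Q) None = None
        \<and> sph_deriv (sph_ext (gproj l P Q)) None
            (exp (- 2 * of_real pi * \<i> * Lim at_infinity (ratf P Q))))
    \<and> (l \<ge> 2 \<longrightarrow>
          sph_ext (gproj l P Q) (Some 0) = Some 0 \<and> crit_pt (sph_ext (gproj l P Q)) (Some 0)
        \<and> sph_ext (gproj l P Q) None = None \<and> crit_pt (sph_ext (gproj l P Q)) None)
    \<and> (l = -1 \<longrightarrow>
          sph_ext (gproj l P Q) (Some 0) = None \<and> sph_ext (gproj l P Q) None = Some 0
        \<and> sph_deriv (sph_ext (gproj l P Q) \<circ> sph_ext (gproj l P Q)) (Some 0)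
            (exp (2 * of_real pi * \<i> * (Lim at_infinity (ratf P Q) - ratf P Q 0))))
    \<and> (l \<le> -2 \<longrightarrow>
          sph_ext (gproj l P Q) (Some 0) = None \<and> sph_ext (gproj l P Q) None = Some 0
        \<and> (crit_pt (sph_ext (gproj l P Q)) (Some 0) \<or> crit_pt (sph_ext (gproj l P Q)) None))
    \<and> (l = 0 \<longrightarrow>
          (crit_pt (sph_ext (gproj l P Q)) (Some 0) \<longleftrightarrow> sph_deriv (sph_ext (ratf P Q)) (Some 0) 0)
        \<and> (crit_pt (sph_ext (gproj l P Q)) None \<longleftrightarrow> sph_deriv (sph_ext (ratf P Q)) None 0))"
proof -
  interpret cor P Q l using assms(1-5) by unfold_locales
  have A: "finite_type (gproj l P Q)" by (rule finite_type_thm)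
  have B: "asym_vals (gproj l P Q) = {Some 0, None}" by (rule asym_eq)
  have C: "ess_sings (gproj l P Q) = Some ` exp1 ` {z. sph_ext (fR l P Q) (Some z) = None}"
    by (rule ess_thm)
  show ?thesis
    using A B C case_l1 case_l2 case_lm1 case_lneg2 case_l0 by blast
qed

end
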